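(* Let $A$ be a Gorenstein local ring of dimension zero with maximal ideal $M$ and exponent $t+1$, and let $v$ generate the socle: $0:M=M^t=vA$. (i) Let $0\subsetneq I_1\subsetneq\cdots\subsetneq I_t=M$ be a strict chain of Gorenstein ideals of length $t$, and let $v=d_t\cdots d_1$ be a factorization of $v$ with $I_i=0:(d_i\cdots d_1)A$ for $1\le i\le t$. Then each $d_i$ lies in $M\setminus M^2$ and $\mathrm{exponent}(A/I_i)=\mathrm{exponent}(A)-i$. In particular $I_1$ is the annihilator of a minimal generator of $M$ and $\mathrm{exponent}(A/I_1)=\mathrm{exponent}(A)-1$. (ii)(a) If $I$ is a Gorenstein ideal of $A$ with $\mathrm{exponent}(A/I)=\mathrm{exponent}(A)-1$, then the principal ideal $0:I$ is generated by an element $y\in M\setminus M^2$. (b) If $A$ is positively graded with its maximal ideal generated by homogeneous elements of degree $1$ and its degree-zero homogeneous elements forming a field, and $y$ is a homogeneous minimal generator of $M$, then $\mathrm{exponent}(A/(0:yA))=\mathrm{exponent}(A)-1$.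
   Context: The exponent of an artinian local ring with maximal ideal $M$ is $\min\{r\in\mathbb N: M^r=0\}$. A Gorenstein ideal of a local ring $A$ is a proper ideal $I$ such that $A/I$ is Gorenstein. *)

theory Defs
  imports "HOL-Algebra.Algebra"
begin

primrec ideal_pow :: "('a, 'b) ring_scheme \<Rightarrow> 'a set \<Rightarrow> nat \<Rightarrow> 'a set" where
  "ideal_pow R I 0 = carrier R"
| "ideal_pow R I (Suc n) = ideal_prod R I (ideal_pow R I n)"

definition ann :: "('a, 'b) ring_scheme \<Rightarrow> 'a set \<Rightarrow> 'a set" where
  "ann R S = {x \<in> carrier R. \<forall>s\<in>S. x \<otimes>\<^bsub>R\<^esub> s = \<zero>\<^bsub>R\<^esub>}"

definition is_local :: "('a, 'b) ring_scheme \<Rightarrow> bool" where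
  "is_local R \<longleftrightarrow> cring R \<and> (\<exists>!M. maximalideal M R)"

definition max_ideal :: "('a, 'b) ring_scheme \<Rightarrow> 'a set" where
  "max_ideal R = (THE M. maximalideal M R)"

text \<open>Artinian local ring = Noetherian local ring of dimension zero
  (equivalently: Noetherian local ring with nilpotent maximal ideal).\<close>
definition artinian_local :: "('a, 'b) ring_scheme \<Rightarrow> bool" where
  "artinian_local R \<longleftrightarrow> is_local R \<and> noetherian_ring R \<and>
     (\<exists>r. ideal_pow R (max_ideal R) r = {\<zero>\<^bsub>R\<^esub>})"

definition exponent :: "('a, 'b) ring_scheme \<Rightarrow> nat" where
  "exponent R = (LEAST r. ideal_pow R (max_ideal R) r = {\<zero>\<^bsub>R\<^esub>})"

text \<open>Gorenstein local ring of dimension zero: artinian local ring whose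
  socle 0:M is a nonzero principal ideal (i.e. one-dimensional over A/M).\<close>
definition gorenstein_artinian :: "('a, 'b) ring_scheme \<Rightarrow> bool" where
  "gorenstein_artinian R \<longleftrightarrow> artinian_local R \<and>
     (\<exists>v\<in>carrier R. v \<noteq> \<zero>\<^bsub>R\<^esub> \<and> ann R (max_ideal R) = PIdl\<^bsub>R\<^esub> v)"

definition gorenstein_ideal :: "('a, 'b) ring_scheme \<Rightarrow> 'a set \<Rightarrow> bool" where
  "gorenstein_ideal R I \<longleftrightarrow> ideal I R \<and> I \<noteq> carrier R \<and> gorenstein_artinian (R Quot I)"

definition graded_by :: "('a, 'b) ring_scheme \<Rightarrow> (nat \<Rightarrow> 'a set) \<Rightarrow> bool" where
  "graded_by R G \<longleftrightarrow>
     (\<forall>n. additive_subgroup (G n) R) \<and>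
     (\<forall>m n. \<forall>x\<in>G m. \<forall>y\<in>G n. x \<otimes>\<^bsub>R\<^esub> y \<in> G (m + n)) \<and>
     (\<forall>a\<in>carrier R. \<exists>!f. (\<forall>n. f n \<in> G n) \<and>
         (\<exists>N. (\<forall>n\<ge>N. f n = \<zero>\<^bsub>R\<^esub>) \<and> a = finsum R f {..<N}))"

end

theory Submission
  imports Defs
begin


primrec geo :: "('a,'b) ring_scheme \<Rightarrow> 'a \<Rightarrow> nat \<Rightarrow> 'a" where
  "geo R m 0 = \<zero>\<^bsub>R\<^esub>"
| "geo R m (Suc n) = \<one>\<^bsub>R\<^esub> \<oplus>\<^bsub>R\<^esub> m \<otimes>\<^bsub>R\<^esub> geo R m n"

lemma (in cring) geo_carrier: "m \<in> carrier R \<Longrightarrow> geo R m n \<in> carrier R"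
  by (induct n) auto

lemma (in cring) geo_eq: "m \<in> carrier R \<Longrightarrow> (\<one> \<ominus> m) \<otimes> geo R m n = \<one> \<ominus> m [^] n"
proof (induct n)
  case 0 then show ?case by (simp add: minus_eq r_neg)
next
  case (Suc n)
  have g: "geo R m n \<in> carrier R" using Suc geo_carrier by auto
  have "(\<one> \<ominus> m) \<otimes> geo R m (Suc n) = (\<one> \<ominus> m) \<oplus> m \<otimes> ((\<one> \<ominus> m) \<otimes> geo R m n)"
    using g Suc(2) by (simp add: r_distr m_lcomm)
  also have "\<dots> = (\<one> \<ominus> m) \<oplus> m \<otimes> (\<one> \<ominus> m [^] n)" using Suc by simp
  also have "\<dots> = \<one> \<ominus> m [^] Suc n"
  proof -
    have p: "m [^] n \<in> carrier R" using Suc(2) by simp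
    have "\<ominus> m \<oplus> (m \<oplus> \<ominus> (m \<otimes> m [^] n)) = \<ominus> (m \<otimes> m [^] n)"
      using Suc(2) p by (simp add: a_assoc[symmetric] l_neg)
    thus ?thesis using Suc(2) p
      by (simp add: minus_eq r_distr r_minus a_assoc nat_pow_Suc2 m_comm[of "m [^] n" m])
  qed
  finally show ?case .
qed

locale GA = cring R for R (structure) +
  fixes M t v
  assumes M_max: "maximalideal M R"
    and M_uniq: "\<And>N. maximalideal N R \<Longrightarrow> N = M"
    and noeth: "noetherian_ring R"
    and Mnil: "ideal_pow R M (Suc t) = {\<zero>}"
    and soc1: "ann R M = ideal_pow R M t"
    and soc2: "ann R M = PIdl v"
    and v_carr: "v \<in> carrier R" and v_nz: "v \<noteq> \<zero>"
begin

lemma M_ideal: "ideal M R" using M_max by (rule maximalideal.axioms(1))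

lemma M_carr: "M \<subseteq> carrier R" using ideal.Icarr[OF M_ideal] by blast
lemma M_ne: "\<one> \<notin> M"
  using ideal.one_imp_carrier[OF M_ideal] maximalideal.I_notcarr[OF M_max] by auto
lemma pow_ideal: "ideal (ideal_pow R M n) R"
proof (induct n)
  case 0 show ?case by (simp add: oneideal)
next
  case (Suc n) show ?case using ideal_prod_is_ideal[OF M_ideal Suc] by simp
qed

lemma pow_carr: "ideal_pow R M n \<subseteq> carrier R"
  using ideal.Icarr[OF pow_ideal] by blast

lemma pow_one: "ideal_pow R M 1 = M"
  using ideal_prod_one[OF M_ideal] by simp

lemma pow_add: "ideal_pow R M (a + b) = ideal_prod R (ideal_pow R M a) (ideal_pow R M b)"
proof (induct a)
  case 0 
  have "ideal_prod R (carrier R) (ideal_pow R M b) = ideal_prod R (ideal_pow R M b) (carrier R)"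
    using ideal_prod_commute[OF oneideal pow_ideal] by simp
  then show ?case using ideal_prod_one[OF pow_ideal] by simp
next
  case (Suc a)
  have "ideal_pow R M (Suc a + b) = ideal_prod R M (ideal_pow R M (a + b))" by simp
  also have "\<dots> = ideal_prod R M (ideal_prod R (ideal_pow R M a) (ideal_pow R M b))" using Suc by simp
  also have "\<dots> = ideal_prod R (ideal_prod R M (ideal_pow R M a)) (ideal_pow R M b)"
    using ideal_prod_assoc[OF M_ideal pow_ideal pow_ideal] by simp
  finally show ?case by simp
qed

lemma pow_mult_mem: "x \<in> ideal_pow R M a \<Longrightarrow> y \<in> ideal_pow R M b \<Longrightarrow> x \<otimes> y \<in> ideal_pow R M (a + b)"
  unfolding pow_add[of a b] by (rule ideal_prod.prod)

lemma pow_Suc_mem: "x \<in> M \<Longrightarrow> y \<in> ideal_pow R M b \<Longrightarrow> x \<otimes> y \<in> ideal_pow R M (Suc b)"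
  by (simp add: ideal_prod.prod)

lemma pow_antimono: "a \<le> b \<Longrightarrow> ideal_pow R M b \<subseteq> ideal_pow R M a"
proof -
  assume "a \<le> b"
  then obtain c where b: "b = c + a" by (metis add.commute le_add_diff_inverse)
  have "ideal_pow R M b = ideal_prod R (ideal_pow R M c) (ideal_pow R M a)" unfolding b by (rule pow_add)
  also have "\<dots> \<subseteq> ideal_pow R M c \<inter> ideal_pow R M a" by (rule ideal_prod_inter[OF pow_ideal pow_ideal])
  finally show ?thesis by blast
qed

lemma pow_zero_mem: "x \<in> ideal_pow R M n \<Longrightarrow> n > t \<Longrightarrow> x = \<zero>"
  using pow_antimono[of "Suc t" n] Mnil by auto

lemma M_pow_elem: "m \<in> M \<Longrightarrow> m [^] n \<in> ideal_pow R M n"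
proof (induct n)
  case 0 then show ?case by simp
next
  case (Suc n)
  have mc: "m \<in> carrier R" using Suc(2) M_carr by blast
  have "m [^] Suc n = m \<otimes> m [^] n" using mc by (simp add: m_comm)
  then show ?case using Suc pow_Suc_mem by simp
qed

lemma one_minus_unit: "m \<in> M \<Longrightarrow> \<one> \<ominus> m \<in> Units R"
proof -
  assume m: "m \<in> M"
  hence mc: "m \<in> carrier R" using M_carr by blast
  have g: "geo R m (Suc t) \<in> carrier R" using geo_carrier[OF mc] .
  have "m [^] Suc t \<in> ideal_pow R M (Suc t)" using M_pow_elem[OF m] .
  hence "m [^] Suc t = \<zero>" using Mnil by blast
  hence 1: "(\<one> \<ominus> m) \<otimes> geo R m (Suc t) = \<one>" using geo_eq[OF mc, of "Suc t"] by (simp add: minus_eq)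
  have "geo R m (Suc t) \<otimes> (\<one> \<ominus> m) = (\<one> \<ominus> m) \<otimes> geo R m (Suc t)"
    using mc g by (intro m_comm) auto
  hence 2: "geo R m (Suc t) \<otimes> (\<one> \<ominus> m) = \<one>" using 1 by simp
  have "\<one> \<ominus> m \<in> carrier R" using mc by simp
  thus ?thesis using 1 2 g unfolding Units_def by blast
qed

lemma nonM_unit: assumes a: "a \<in> carrier R" "a \<notin> M" shows "a \<in> Units R"
proof -
  have K: "ideal (M <+> PIdl a) R" using add_ideals[OF M_ideal cgenideal_ideal[OF a(1)]] .
  have z: "\<zero> \<in> PIdl a" using a(1) unfolding cgenideal_def by (auto intro!: exI[of _ "\<zero>"])
  have MK: "M \<subseteq> M <+> PIdl a"
  proof
    fix m assume m: "m \<in> M"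
    hence "m = m \<oplus> \<zero>" using M_carr by auto
    thus "m \<in> M <+> PIdl a" using m z unfolding set_add_def' by blast
  qed
  have aK: "a \<in> M <+> PIdl a"
  proof -
    have "\<zero> \<in> M" using additive_subgroup.zero_closed[OF ideal.axioms(1)[OF M_ideal]] .
    moreover have "a = \<zero> \<oplus> a" using a(1) by simp
    moreover have "a \<in> PIdl a" using cgenideal_self[OF a(1)] .
    ultimately show ?thesis unfolding set_add_def' by blast
  qed
  have "M <+> PIdl a \<noteq> M" using aK a(2) by blast
  hence "M <+> PIdl a = carrier R"
  proof -
    have KC: "M <+> PIdl a \<subseteq> carrier R" using ideal.Icarr[OF K] by blast
    show ?thesis using maximalideal.I_maximal[OF M_max K MK KC] \<open>M <+> PIdl a \<noteq> M\<close> by blast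
  qed
  hence "\<one> \<in> M <+> PIdl a" by simp
  then obtain m x where mx: "m \<in> M" "x \<in> PIdl a" "\<one> = m \<oplus> x"
    unfolding set_add_def' by blast
  then obtain r where r: "r \<in> carrier R" "x = r \<otimes> a" unfolding cgenideal_def by blast
  have mc: "m \<in> carrier R" using mx M_carr by blast
  have ra: "r \<otimes> a \<in> carrier R" using r a by simp
  have "\<one> \<ominus> m = (m \<oplus> r \<otimes> a) \<oplus> \<ominus> m" using mx r by (simp add: minus_eq)
  also have "\<dots> = r \<otimes> a" using mc ra by (simp add: a_comm[of m] a_assoc r_neg)
  finally have u: "r \<otimes> a \<in> Units R" using one_minus_unit[OF mx(1)] by simp
  then obtain w where w: "w \<in> carrier R" "w \<otimes> (r \<otimes> a) = \<one>" unfolding Units_def by blast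
  have 1: "(w \<otimes> r) \<otimes> a = \<one>" using w r a(1) by (simp add: m_assoc)
  have 2: "a \<otimes> (w \<otimes> r) = \<one>" using 1 w r a(1) by (simp add: m_comm[of a])
  show ?thesis using 1 2 w r a(1) unfolding Units_def by blast
qed

end


context GA begin

lemma ann_carr: "ann R S \<subseteq> carrier R" unfolding ann_def by blast

lemma ann_mem: "a \<in> ann R S \<longleftrightarrow> a \<in> carrier R \<and> (\<forall>s\<in>S. a \<otimes> s = \<zero>)"
  unfolding ann_def by blast

lemma ann_ideal: assumes S: "S \<subseteq> carrier R" shows "ideal (ann R S) R"
proof (rule idealI)
  show "ring R" by (rule ring_axioms)
  show "subgroup (ann R S) (add_monoid R)"
  proof (rule add.subgroupI)
    show "ann R S \<subseteq> carrier R" using ann_carr by simp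
    have "\<zero> \<in> ann R S" using S unfolding ann_def by auto
    thus "ann R S \<noteq> {}" by blast
  next
    fix a assume a: "a \<in> ann R S"
    hence ac: "a \<in> carrier R" using ann_carr by blast
    have "\<forall>s\<in>S. (\<ominus> a) \<otimes> s = \<zero>"
    proof
      fix s assume s: "s \<in> S"
      hence "(\<ominus> a) \<otimes> s = \<ominus> (a \<otimes> s)" using S ac by (simp add: l_minus subset_iff)
      thus "(\<ominus> a) \<otimes> s = \<zero>" using a s unfolding ann_def by simp
    qed
    thus "\<ominus> a \<in> ann R S" using ac unfolding ann_def by simp
  next
    fix a b assume a: "a \<in> ann R S" and b: "b \<in> ann R S"
    hence ac: "a \<in> carrier R" and bc: "b \<in> carrier R" using ann_carr by blast+
    have "\<forall>s\<in>S. (a \<oplus> b) \<otimes> s = \<zero>"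
    proof
      fix s assume s: "s \<in> S"
      hence "(a \<oplus> b) \<otimes> s = a \<otimes> s \<oplus> b \<otimes> s" using S ac bc by (simp add: l_distr subset_iff)
      thus "(a \<oplus> b) \<otimes> s = \<zero>" using a b s unfolding ann_def by simp
    qed
    thus "a \<oplus> b \<in> ann R S" using ac bc unfolding ann_def by simp
  qed
next
  fix a x assume a: "a \<in> ann R S" and x: "x \<in> carrier R"
  hence ac: "a \<in> carrier R" using ann_carr by blast
  have 1: "\<forall>s\<in>S. (x \<otimes> a) \<otimes> s = \<zero>"
  proof
    fix s assume s: "s \<in> S"
    hence "(x \<otimes> a) \<otimes> s = x \<otimes> (a \<otimes> s)" using S ac x by (simp add: m_assoc subset_iff)
    thus "(x \<otimes> a) \<otimes> s = \<zero>" using a s x unfolding ann_def by simp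
  qed
  thus "x \<otimes> a \<in> ann R S" using ac x unfolding ann_def by simp
  have "a \<otimes> x = x \<otimes> a" using ac x by (simp add: m_comm)
  thus "a \<otimes> x \<in> ann R S" using 1 ac x unfolding ann_def by simp
qed

lemma ann_anti: "S \<subseteq> T \<Longrightarrow> ann R T \<subseteq> ann R S" unfolding ann_def by blast

lemma ann_ann_sup: assumes S: "S \<subseteq> carrier R" shows "S \<subseteq> ann R (ann R S)"
proof
  fix s assume s: "s \<in> S"
  have "\<forall>a\<in>ann R S. s \<otimes> a = \<zero>"
  proof
    fix a assume a: "a \<in> ann R S"
    hence "a \<otimes> s = \<zero>" "a \<in> carrier R" unfolding ann_def using s by auto
    thus "s \<otimes> a = \<zero>" using s S by (simp add: m_comm subset_iff)
  qed
  thus "s \<in> ann R (ann R S)" using s S unfolding ann_def by blast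
qed

lemma ann_zero: "ann R {\<zero>} = carrier R" unfolding ann_def by auto

lemma ann_carrier: "ann R (carrier R) = {\<zero>}" unfolding ann_def
proof
  show "{x \<in> carrier R. \<forall>s\<in>carrier R. x \<otimes> s = \<zero>} \<subseteq> {\<zero>}"
  proof
    fix x assume "x \<in> {x \<in> carrier R. \<forall>s\<in>carrier R. x \<otimes> s = \<zero>}"
    hence x: "x \<in> carrier R" "\<forall>s\<in>carrier R. x \<otimes> s = \<zero>" by auto
    hence "x \<otimes> \<one> = \<zero>" by blast
    thus "x \<in> {\<zero>}" using x by simp
  qed
  show "{\<zero>} \<subseteq> {x \<in> carrier R. \<forall>s\<in>carrier R. x \<otimes> s = \<zero>}" by auto
qed

lemma PIdl_mem: "x \<in> carrier R \<Longrightarrow> y \<in> PIdl x \<longleftrightarrow> (\<exists>r\<in>carrier R. y = r \<otimes> x)"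
  unfolding cgenideal_def by blast

lemma ann_PIdl: assumes x: "x \<in> carrier R" shows "ann R (PIdl x) = {a \<in> carrier R. a \<otimes> x = \<zero>}"
proof
  show "ann R (PIdl x) \<subseteq> {a \<in> carrier R. a \<otimes> x = \<zero>}"
    using cgenideal_self[OF x] unfolding ann_def by blast
  show "{a \<in> carrier R. a \<otimes> x = \<zero>} \<subseteq> ann R (PIdl x)"
  proof
    fix a assume "a \<in> {a \<in> carrier R. a \<otimes> x = \<zero>}"
    hence a: "a \<in> carrier R" "a \<otimes> x = \<zero>" by auto
    have "\<forall>s\<in>PIdl x. a \<otimes> s = \<zero>"
    proof
      fix s assume "s \<in> PIdl x"
      then obtain r where r: "r \<in> carrier R" "s = r \<otimes> x" using PIdl_mem[OF x] by blast
      have "a \<otimes> (r \<otimes> x) = r \<otimes> (a \<otimes> x)" using m_lcomm[OF a(1) r(1) x] .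
      thus "a \<otimes> s = \<zero>" using a r by simp
    qed
    thus "a \<in> ann R (PIdl x)" using a unfolding ann_def by blast
  qed
qed

lemma soc_mem: "s \<in> ann R M \<longleftrightarrow> s \<in> carrier R \<and> (\<forall>m\<in>M. s \<otimes> m = \<zero>)"
  by (rule ann_mem)

lemma v_soc: "v \<in> ann R M" using soc2 cgenideal_self[OF v_carr] by simp

lemma soc_gen: assumes s: "s \<in> ann R M" and s': "s' \<in> ann R M" "s' \<noteq> \<zero>"
  shows "\<exists>c\<in>carrier R. s = c \<otimes> s'"
proof -
  obtain r where r: "r \<in> carrier R" "s = r \<otimes> v" using s soc2 PIdl_mem[OF v_carr] by auto
  obtain r' where r': "r' \<in> carrier R" "s' = r' \<otimes> v" using s' soc2 PIdl_mem[OF v_carr] by auto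
  have "r' \<notin> M"
  proof
    assume "r' \<in> M"
    hence "v \<otimes> r' = \<zero>" using v_soc soc_mem by blast
    hence "s' = \<zero>" using r' v_carr by (simp add: m_comm)
    thus False using s' by simp
  qed
  hence "r' \<in> Units R" using nonM_unit r' by blast
  then obtain w where w: "w \<in> carrier R" "w \<otimes> r' = \<one>" unfolding Units_def by blast
  have "(w \<otimes> r') \<otimes> v = v" using w v_carr by simp
  hence "s = r \<otimes> ((w \<otimes> r') \<otimes> v)" using r by simp
  also have "\<dots> = (r \<otimes> w) \<otimes> (r' \<otimes> v)"
    by (simp only: m_assoc r(1) w(1) r'(1) v_carr m_closed)
  finally have "s = (r \<otimes> w) \<otimes> s'" using r' by simp
  thus ?thesis using r w by blast
qed

lemma push_down: assumes I: "ideal I R" and x: "x \<in> carrier R" "x \<notin> I"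
  shows "\<exists>b\<in>carrier R. x \<otimes> b \<notin> I \<and> (\<forall>m\<in>M. (x \<otimes> b) \<otimes> m \<in> I)"
proof (rule ccontr)
  assume H: "\<not> ?thesis"
  have "\<exists>b\<in>ideal_pow R M k. x \<otimes> b \<notin> I" for k
  proof (induct k)
    case 0 show ?case using x by (intro bexI[of _ \<one>]) auto
  next
    case (Suc k)
    then obtain b where b: "b \<in> ideal_pow R M k" "x \<otimes> b \<notin> I" by blast
    have bc: "b \<in> carrier R" using b pow_carr by blast
    then obtain m where m: "m \<in> M" "(x \<otimes> b) \<otimes> m \<notin> I" using H b by blast
    have mc: "m \<in> carrier R" using m M_carr by blast
    have "x \<otimes> (m \<otimes> b) = (x \<otimes> b) \<otimes> m" using x mc bc by (simp add: m_assoc m_comm[of m])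
    thus ?case using pow_Suc_mem[OF m(1) b(1)] m(2) by (intro bexI[of _ "m \<otimes> b"]) auto
  qed
  then obtain b where "b \<in> ideal_pow R M (Suc t)" "x \<otimes> b \<notin> I" by blast
  hence "b = \<zero>" "x \<otimes> b \<notin> I" using Mnil by auto
  hence "\<zero> \<notin> I" using x by simp
  thus False using additive_subgroup.zero_closed[OF ideal.axioms(1)[OF I]] by blast
qed

end


definition plusx :: "('a,'b) ring_scheme \<Rightarrow> 'a set \<Rightarrow> 'a \<Rightarrow> 'a set" where
  "plusx R J x = {j \<oplus>\<^bsub>R\<^esub> (r \<otimes>\<^bsub>R\<^esub> x) | j r. j \<in> J \<and> r \<in> carrier R}"

definition elem :: "('a,'b) ring_scheme \<Rightarrow> 'a set \<Rightarrow> 'a set \<Rightarrow> 'a set \<Rightarrow> bool" where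
  "elem R M J K \<longleftrightarrow> ideal J R \<and> (\<exists>x\<in>carrier R. x \<notin> J \<and> (\<forall>m\<in>M. x \<otimes>\<^bsub>R\<^esub> m \<in> J) \<and> K = plusx R J x)"

definition chainup :: "('a,'b) ring_scheme \<Rightarrow> 'a set \<Rightarrow> 'a set \<Rightarrow> nat \<Rightarrow> bool" where
  "chainup R M J n \<longleftrightarrow> (\<exists>f. f 0 = J \<and> f n = carrier R \<and> (\<forall>i<n. elem R M (f i) (f (Suc i))))"

definition colen :: "('a,'b) ring_scheme \<Rightarrow> 'a set \<Rightarrow> 'a set \<Rightarrow> nat" where
  "colen R M J = (LEAST n. chainup R M J n)"

context GA begin

lemma id_add: assumes "ideal I R" "a \<in> I" "b \<in> I" shows "a \<oplus> b \<in> I"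
  using additive_subgroup.a_closed[OF ideal.axioms(1)[OF assms(1)] assms(2,3)] .
lemma id_neg: assumes "ideal I R" "a \<in> I" shows "\<ominus> a \<in> I"
  using additive_subgroup.a_inv_closed[OF ideal.axioms(1)[OF assms(1)] assms(2)] .
lemma id_carr: assumes "ideal I R" "a \<in> I" shows "a \<in> carrier R"
  using ideal.Icarr[OF assms] .
lemma id_minus: assumes "ideal I R" "a \<in> I" "b \<in> I" shows "a \<ominus> b \<in> I"
  using id_add[OF assms(1,2) id_neg[OF assms(1,3)]] by (simp add: minus_eq)
lemma id_lmult: assumes "ideal I R" "a \<in> I" "x \<in> carrier R" shows "x \<otimes> a \<in> I"
  using ideal.I_l_closed[OF assms] .
lemma id_rmult: assumes "ideal I R" "a \<in> I" "x \<in> carrier R" shows "a \<otimes> x \<in> I"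
  using ideal.I_r_closed[OF assms] .
lemma id_zero: assumes "ideal I R" shows "\<zero> \<in> I"
  using additive_subgroup.zero_closed[OF ideal.axioms(1)[OF assms]] .

lemma plusx_mem: "a \<in> plusx R J x \<longleftrightarrow> (\<exists>j r. j \<in> J \<and> r \<in> carrier R \<and> a = j \<oplus> r \<otimes> x)"
  unfolding plusx_def by blast

lemma plusx_ideal: assumes J: "ideal J R" and x: "x \<in> carrier R" shows "ideal (plusx R J x) R"
proof -
  have "plusx R J x = J <+> PIdl x"
    unfolding plusx_def set_add_def' cgenideal_def by blast
  thus ?thesis using add_ideals[OF J cgenideal_ideal[OF x]] by simp
qed

lemma plusx_sub: assumes J: "ideal J R" and x: "x \<in> carrier R" shows "J \<subseteq> plusx R J x"
proof
  fix j assume j: "j \<in> J"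
  hence "j = j \<oplus> \<zero> \<otimes> x" using x id_carr[OF J j] by simp
  thus "j \<in> plusx R J x" using j unfolding plusx_mem by blast
qed

lemma plusx_self: assumes J: "ideal J R" and x: "x \<in> carrier R" shows "x \<in> plusx R J x"
proof -
  have "x = \<zero> \<oplus> \<one> \<otimes> x" using x by simp
  thus ?thesis using id_zero[OF J] unfolding plusx_mem by blast
qed

lemma plusx_min: assumes K: "ideal K R" and JK: "J \<subseteq> K" and x: "x \<in> K" shows "plusx R J x \<subseteq> K"
proof
  fix a assume "a \<in> plusx R J x"
  then obtain j r where "j \<in> J" "r \<in> carrier R" "a = j \<oplus> r \<otimes> x" unfolding plusx_mem by blast
  thus "a \<in> K" using id_add[OF K] id_lmult[OF K] JK x by blast
qed

lemma plusx_in: assumes J: "ideal J R" and x: "x \<in> J" shows "plusx R J x = J"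
  using plusx_min[OF J _ x] plusx_sub[OF J id_carr[OF J x]] by blast

lemma elem_ideal: "elem R M J K \<Longrightarrow> ideal K R"
  unfolding elem_def using plusx_ideal by blast

lemma elem_sub: "elem R M J K \<Longrightarrow> J \<subseteq> K"
  unfolding elem_def using plusx_sub by blast

lemma elem_neq: "elem R M J K \<Longrightarrow> J \<noteq> K"
  unfolding elem_def using plusx_self by blast

lemma elem_simple:
  assumes e: "elem R M J K" and L: "ideal L R" "J \<subseteq> L" "L \<subseteq> K"
  shows "L = J \<or> L = K"
proof (rule ccontr)
  assume H: "\<not> (L = J \<or> L = K)"
  obtain x where x: "x \<in> carrier R" "x \<notin> J" "\<forall>m\<in>M. x \<otimes> m \<in> J" "K = plusx R J x" and J: "ideal J R"
    using e unfolding elem_def by blast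
  obtain y where y: "y \<in> L" "y \<notin> J" using H L(2) by blast
  have "y \<in> plusx R J x" using y(1) L(3) x(4) by blast
  then obtain j r where jr: "j \<in> J" "r \<in> carrier R" "y = j \<oplus> r \<otimes> x"
    unfolding plusx_mem by blast
  have jc: "j \<in> carrier R" using id_carr[OF J jr(1)] .
  have "r \<notin> M"
  proof
    assume "r \<in> M"
    hence "x \<otimes> r \<in> J" using x(3) by blast
    hence "r \<otimes> x \<in> J" using x(1) jr(2) by (simp add: m_comm)
    hence "y \<in> J" using jr id_add[OF J] by blast
    thus False using y by blast
  qed
  hence "r \<in> Units R" using nonM_unit jr(2) by blast
  then obtain w where w: "w \<in> carrier R" "w \<otimes> r = \<one>" unfolding Units_def by blast
  have "r \<otimes> x = y \<ominus> j" using jr jc x(1) by (simp add: minus_eq a_comm[of j] a_assoc r_neg)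
  hence "r \<otimes> x \<in> L" using id_minus[OF L(1)] y(1) L(2) jr(1) by auto
  hence "w \<otimes> (r \<otimes> x) \<in> L" using id_lmult[OF L(1)] w by blast
  moreover have "w \<otimes> (r \<otimes> x) = x" using w jr(2) x(1) by (simp add: m_assoc[symmetric])
  ultimately have "x \<in> L" by simp
  hence "K \<subseteq> L" using plusx_min[OF L(1) L(2)] x(4) by simp
  thus False using H L(3) by blast
qed

lemma chain_prepend: assumes e: "elem R M J K" and c: "chainup R M K n" shows "chainup R M J (Suc n)"
proof -
  obtain f where f: "f 0 = K" "f n = carrier R" "\<forall>i<n. elem R M (f i) (f (Suc i))"
    using c unfolding chainup_def by blast
  define g where "g i = (if i = 0 then J else f (i - 1))" for i
  have "\<forall>i<Suc n. elem R M (g i) (g (Suc i))"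
  proof (intro allI impI)
    fix i assume "i < Suc n"
    thus "elem R M (g i) (g (Suc i))" using e f unfolding g_def
      by (cases i) auto
  qed
  moreover have "g 0 = J" "g (Suc n) = carrier R" using f unfolding g_def by auto
  ultimately show ?thesis unfolding chainup_def by blast
qed

lemma chainup_zero: "chainup R M (carrier R) 0"
  unfolding chainup_def by auto

lemma wf_ideals: "wf {(K, J). ideal J R \<and> ideal K R \<and> J \<subset> K}"
proof (rule ccontr)
  assume "\<not> ?thesis"
  then obtain f where f: "\<And>i. (f (Suc i), f i) \<in> {(K, J). ideal J R \<and> ideal K R \<and> J \<subset> K}"
    unfolding wf_iff_no_infinite_down_chain by blast
  hence fi: "\<And>i. ideal (f i) R" and fs: "\<And>i. f i \<subset> f (Suc i)" by auto
  have mono: "\<And>i j. i \<le> j \<Longrightarrow> f i \<subseteq> f j"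
    using lift_Suc_mono_le[of f] fs by (metis order_less_imp_le)
  have tot: "\<forall>U\<in>range f. \<forall>V\<in>range f. U \<subseteq> V \<or> V \<subseteq> U"
  proof (intro ballI)
    fix U V assume "U \<in> range f" "V \<in> range f"
    then obtain i j where ij: "U = f i" "V = f j" by blast
    have "f i \<subseteq> f j \<or> f j \<subseteq> f i"
    proof (cases "i \<le> j")
      case True thus ?thesis using mono[of i j] by simp
    next
      case False thus ?thesis using mono[of j i] by simp
    qed
    thus "U \<subseteq> V \<or> V \<subseteq> U" using ij by blast
  qed
  have ch: "subset.chain {I. ideal I R} (range f)"
    unfolding pred_on.chain_def using fi tot by blast
  have "\<Union>(range f) \<in> range f"
    using noetherian_ring.ideal_chain_is_trivial[OF noeth _ ch] by blast
  then obtain n where n: "\<Union>(range f) = f n" by blast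
  have "f (Suc n) \<subseteq> f n" using n by blast
  thus False using fs[of n] by blast
qed

lemma chain_exists: "ideal J R \<Longrightarrow> \<exists>n. chainup R M J n"
proof (induct J rule: wf_induct[OF wf_ideals])
  case (1 J)
  show ?case
  proof (cases "J = carrier R")
    case True thus ?thesis using chainup_zero by blast
  next
    case False
    have "\<one> \<notin> J" using ideal.one_imp_carrier[OF 1(2)] False by blast
    then obtain b where b: "b \<in> carrier R" "\<one> \<otimes> b \<notin> J" "\<forall>m\<in>M. (\<one> \<otimes> b) \<otimes> m \<in> J"
      using push_down[OF 1(2), of \<one>] by auto
    hence b': "b \<notin> J" "\<forall>m\<in>M. b \<otimes> m \<in> J" by auto
    have e: "elem R M J (plusx R J b)" unfolding elem_def using 1(2) b(1) b' by blast
    have "(plusx R J b, J) \<in> {(K, J). ideal J R \<and> ideal K R \<and> J \<subset> K}"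
      using 1(2) elem_ideal[OF e] elem_sub[OF e] elem_neq[OF e] by auto
    then obtain n where "chainup R M (plusx R J b) n" using 1(1) elem_ideal[OF e] by blast
    thus ?thesis using chain_prepend[OF e] by blast
  qed
qed

lemma colen_chain: "ideal J R \<Longrightarrow> chainup R M J (colen R M J)"
  unfolding colen_def using chain_exists by (rule LeastI_ex)

lemma colen_le: "chainup R M J n \<Longrightarrow> colen R M J \<le> n"
  unfolding colen_def by (rule Least_le)

lemma colen_carrier: "colen R M (carrier R) = 0"
  using colen_le[OF chainup_zero] by simp

lemma compress:
  "\<And>f J. f 0 = J \<Longrightarrow> f n = carrier R \<Longrightarrow> (\<forall>i<n. f i = f (Suc i) \<or> elem R M (f i) (f (Suc i))) \<Longrightarrow>
    \<exists>m\<le>n. chainup R M J m \<and> ((\<exists>i<n. f i = f (Suc i)) \<longrightarrow> m < n)"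
proof (induct n)
  case 0 thus ?case using chainup_zero by auto
next
  case (Suc n)
  define f' where "f' i = f (Suc i)" for i
  have "\<forall>i<n. f' i = f' (Suc i) \<or> elem R M (f' i) (f' (Suc i))" using Suc(4) unfolding f'_def by auto
  then obtain m where m: "m \<le> n" "chainup R M (f 1) m" "(\<exists>i<n. f' i = f' (Suc i)) \<longrightarrow> m < n"
    using Suc(1)[of f' "f 1"] Suc(3) unfolding f'_def by auto
  have "f 0 = f 1 \<or> elem R M (f 0) (f 1)" using Suc(4) by auto
  thus ?case
  proof
    assume "f 0 = f 1"
    thus ?thesis using m Suc(2) by (intro exI[of _ m]) auto
  next
    assume e: "elem R M (f 0) (f 1)"
    have "chainup R M J (Suc m)" using chain_prepend[OF e] m(2) Suc(2) by simp
    moreover have "(\<exists>i<Suc n. f i = f (Suc i)) \<longrightarrow> Suc m < Suc n"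
    proof
      assume "\<exists>i<Suc n. f i = f (Suc i)"
      then obtain i where i: "i < Suc n" "f i = f (Suc i)" by blast
      have "i \<noteq> 0" using i elem_neq[OF e] by auto
      then obtain i' where "i = Suc i'" by (cases i) auto
      hence "\<exists>i<n. f' i = f' (Suc i)" using i unfolding f'_def by auto
      thus "Suc m < Suc n" using m by simp
    qed
    ultimately show ?thesis using m by (intro exI[of _ "Suc m"]) auto
  qed
qed

end


context GA begin

lemma set_add_mem: "a \<in> K <+>\<^bsub>R\<^esub> F \<longleftrightarrow> (\<exists>k\<in>K. \<exists>f\<in>F. a = k \<oplus> f)"
  unfolding set_add_def' by blast

lemma sum_sub: assumes J: "ideal J R" and K: "ideal K R" and JK: "J \<subseteq> K" shows "K <+>\<^bsub>R\<^esub> J = K"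
proof
  show "K <+>\<^bsub>R\<^esub> J \<subseteq> K"
  proof
    fix a assume "a \<in> K <+>\<^bsub>R\<^esub> J"
    then obtain k j where "k \<in> K" "j \<in> J" "a = k \<oplus> j" unfolding set_add_mem by blast
    thus "a \<in> K" using id_add[OF K] JK by blast
  qed
  show "K \<subseteq> K <+>\<^bsub>R\<^esub> J"
  proof
    fix k assume k: "k \<in> K"
    hence "k = k \<oplus> \<zero>" using id_carr[OF K k] by simp
    thus "k \<in> K <+>\<^bsub>R\<^esub> J" using k id_zero[OF J] unfolding set_add_mem by blast
  qed
qed

lemma sum_left: assumes J: "ideal J R" and K: "ideal K R" shows "J \<subseteq> K <+>\<^bsub>R\<^esub> J"
proof
  fix j assume j: "j \<in> J"
  hence "j = \<zero> \<oplus> j" using id_carr[OF J j] by simp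
  thus "j \<in> K <+>\<^bsub>R\<^esub> J" using j id_zero[OF K] unfolding set_add_mem by blast
qed

lemma sum_right: assumes J: "ideal J R" and K: "ideal K R" shows "K \<subseteq> K <+>\<^bsub>R\<^esub> J"
proof
  fix k assume k: "k \<in> K"
  hence "k = k \<oplus> \<zero>" using id_carr[OF K k] by simp
  thus "k \<in> K <+>\<^bsub>R\<^esub> J" using k id_zero[OF J] unfolding set_add_mem by blast
qed

lemma sum_carrier: assumes K: "ideal K R" shows "K <+>\<^bsub>R\<^esub> carrier R = carrier R"
  using sum_left[OF oneideal K] id_carr[OF add_ideals[OF K oneideal]] by blast

lemma sum_min: assumes L: "ideal L R" and "K \<subseteq> L" "F \<subseteq> L" shows "K <+>\<^bsub>R\<^esub> F \<subseteq> L"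
proof
  fix a assume "a \<in> K <+>\<^bsub>R\<^esub> F"
  then obtain k f where "k \<in> K" "f \<in> F" "a = k \<oplus> f" unfolding set_add_mem by blast
  thus "a \<in> L" using id_add[OF L] assms by blast
qed

lemma sum_plusx: assumes K: "ideal K R" and F: "ideal F R" and x: "x \<in> carrier R"
  shows "K <+>\<^bsub>R\<^esub> plusx R F x = plusx R (K <+>\<^bsub>R\<^esub> F) x"
proof
  show "K <+>\<^bsub>R\<^esub> plusx R F x \<subseteq> plusx R (K <+>\<^bsub>R\<^esub> F) x"
  proof
    fix a assume "a \<in> K <+>\<^bsub>R\<^esub> plusx R F x"
    then obtain k b where kb: "k \<in> K" "b \<in> plusx R F x" "a = k \<oplus> b" unfolding set_add_mem by blast
    then obtain f r where fr: "f \<in> F" "r \<in> carrier R" "b = f \<oplus> r \<otimes> x" unfolding plusx_mem by blast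
    have "a = (k \<oplus> f) \<oplus> r \<otimes> x" using kb fr id_carr[OF K kb(1)] id_carr[OF F fr(1)] x by (simp add: a_assoc)
    moreover have "k \<oplus> f \<in> K <+>\<^bsub>R\<^esub> F" using kb fr unfolding set_add_mem by blast
    ultimately show "a \<in> plusx R (K <+>\<^bsub>R\<^esub> F) x" using fr unfolding plusx_mem by blast
  qed
  show "plusx R (K <+>\<^bsub>R\<^esub> F) x \<subseteq> K <+>\<^bsub>R\<^esub> plusx R F x"
  proof
    fix a assume "a \<in> plusx R (K <+>\<^bsub>R\<^esub> F) x"
    then obtain c r where cr: "c \<in> K <+>\<^bsub>R\<^esub> F" "r \<in> carrier R" "a = c \<oplus> r \<otimes> x" unfolding plusx_mem by blast
    then obtain k f where kf: "k \<in> K" "f \<in> F" "c = k \<oplus> f" unfolding set_add_mem by blast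
    have "a = k \<oplus> (f \<oplus> r \<otimes> x)" using cr kf id_carr[OF K kf(1)] id_carr[OF F kf(2)] x by (simp add: a_assoc)
    moreover have "f \<oplus> r \<otimes> x \<in> plusx R F x" using kf cr unfolding plusx_mem by blast
    ultimately show "a \<in> K <+>\<^bsub>R\<^esub> plusx R F x" using kf unfolding set_add_mem by blast
  qed
qed

lemma sum_step: assumes K: "ideal K R" and e: "elem R M F F'"
  shows "K <+>\<^bsub>R\<^esub> F' = K <+>\<^bsub>R\<^esub> F \<or> elem R M (K <+>\<^bsub>R\<^esub> F) (K <+>\<^bsub>R\<^esub> F')"
proof -
  obtain x where x: "x \<in> carrier R" "x \<notin> F" "\<forall>m\<in>M. x \<otimes> m \<in> F" "F' = plusx R F x" and F: "ideal F R"
    using e unfolding elem_def by blast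
  have KF: "ideal (K <+>\<^bsub>R\<^esub> F) R" using add_ideals[OF K F] .
  have eq: "K <+>\<^bsub>R\<^esub> F' = plusx R (K <+>\<^bsub>R\<^esub> F) x" using sum_plusx[OF K F x(1)] x(4) by simp
  show ?thesis
  proof (cases "x \<in> K <+>\<^bsub>R\<^esub> F")
    case True thus ?thesis using eq plusx_in[OF KF] by simp
  next
    case False
    have "\<forall>m\<in>M. x \<otimes> m \<in> K <+>\<^bsub>R\<^esub> F" using x(3) sum_left[OF F K] by blast
    thus ?thesis using False eq KF x(1) unfolding elem_def by blast
  qed
qed

lemma colen_anti: assumes J: "ideal J R" and K: "ideal K R" and JK: "J \<subseteq> K"
  shows "colen R M K \<le> colen R M J" "J \<noteq> K \<Longrightarrow> colen R M K < colen R M J"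
proof -
  define n where "n = colen R M J"
  obtain f where f: "f 0 = J" "f n = carrier R" "\<forall>i<n. elem R M (f i) (f (Suc i))"
    using colen_chain[OF J] unfolding chainup_def n_def by blast
  have fid: "ideal (f i) R" if "i \<le> n" for i
  proof (cases "i < n")
    case True
    hence "elem R M (f i) (f (Suc i))" using f(3) by blast
    thus ?thesis by (simp add: elem_def)
  next
    case False thus ?thesis using that f(2) oneideal by simp
  qed
  define g where "g i = K <+>\<^bsub>R\<^esub> f i" for i
  have g0: "g 0 = K" unfolding g_def using sum_sub[OF J K JK] f(1) by simp
  have gn: "g n = carrier R" unfolding g_def using sum_carrier[OF K] f(2) by simp
  have gs: "\<forall>i<n. g i = g (Suc i) \<or> elem R M (g i) (g (Suc i))"
  proof (intro allI impI)
    fix i assume "i < n"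
    hence "elem R M (f i) (f (Suc i))" using f(3) by blast
    thus "g i = g (Suc i) \<or> elem R M (g i) (g (Suc i))" using sum_step[OF K] unfolding g_def by auto
  qed
  obtain m where m: "m \<le> n" "chainup R M K m" "(\<exists>i<n. g i = g (Suc i)) \<longrightarrow> m < n"
    using compress[OF g0 gn gs] by blast
  show "colen R M K \<le> colen R M J" using colen_le[OF m(2)] m(1) unfolding n_def by simp
  assume neq: "J \<noteq> K"
  have "\<exists>i<n. K \<inter> f i \<noteq> K \<inter> f (Suc i)"
  proof (rule ccontr)
    assume "\<not> ?thesis"
    hence all: "\<forall>i<n. K \<inter> f i = K \<inter> f (Suc i)" by blast
    have "i \<le> n \<Longrightarrow> K \<inter> f i = J" for i
    proof (induct i)
      case 0 thus ?case using f(1) JK by auto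
    next
      case (Suc i) thus ?case using all by auto
    qed
    hence "K \<inter> f n = J" by simp
    hence "K \<inter> carrier R = J" using f(2) by simp
    thus False using neq id_carr[OF K] by blast
  qed
  then obtain i where i: "i < n" "K \<inter> f i \<noteq> K \<inter> f (Suc i)" by blast
  have sub: "f i \<subseteq> f (Suc i)" using elem_sub f(3) i(1) by blast
  then obtain y where y: "y \<in> K" "y \<in> f (Suc i)" "y \<notin> f i" using i(2) by blast
  have fi: "ideal (f i) R" and fsi: "ideal (f (Suc i)) R" using fid i(1) by auto
  have yc: "y \<in> carrier R" using id_carr[OF K y(1)] .
  have L: "ideal (plusx R (f i) y) R" using plusx_ideal[OF fi yc] .
  have "plusx R (f i) y = f i \<or> plusx R (f i) y = f (Suc i)"
    using elem_simple[OF _ L plusx_sub[OF fi yc] plusx_min[OF fsi sub y(2)]] f(3) i(1) by blast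
  hence eqp: "plusx R (f i) y = f (Suc i)" using plusx_self[OF fi yc] y(3) by auto
  have "plusx R (f i) y \<subseteq> g i"
    unfolding g_def using plusx_min[OF add_ideals[OF K fi] sum_left[OF fi K]] y(1) sum_right[OF fi K] by blast
  hence "g (Suc i) \<subseteq> g i" unfolding g_def using eqp
    sum_min[OF add_ideals[OF K fi] sum_right[OF fi K], of "f (Suc i)"] by simp
  moreover have "g i \<subseteq> g (Suc i)" unfolding g_def using sub unfolding set_add_def' by blast
  ultimately have "g i = g (Suc i)" by blast
  hence "m < n" using m(3) i(1) by blast
  thus "colen R M K < colen R M J" using colen_le[OF m(2)] unfolding n_def by simp
qed

lemma colen_elem: assumes e: "elem R M J K" shows "colen R M J = Suc (colen R M K)"
proof -
  have J: "ideal J R" using e unfolding elem_def by blast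
  have K: "ideal K R" using elem_ideal[OF e] .
  have "colen R M K < colen R M J" using colen_anti(2)[OF J K elem_sub[OF e] elem_neq[OF e]] .
  moreover have "colen R M J \<le> Suc (colen R M K)"
    using colen_le[OF chain_prepend[OF e colen_chain[OF K]]] .
  ultimately show ?thesis by simp
qed

lemma colen_eq: assumes "ideal J R" "ideal K R" "J \<subseteq> K" "colen R M J = colen R M K" shows "J = K"
  using colen_anti(2)[OF assms(1-3)] assms(4) by (cases "J = K") auto

end


context GA begin

lemma ann_plusx: assumes J: "ideal J R" and x: "x \<in> carrier R"
  shows "ann R (plusx R J x) = {a \<in> ann R J. a \<otimes> x = \<zero>}"
proof
  show "ann R (plusx R J x) \<subseteq> {a \<in> ann R J. a \<otimes> x = \<zero>}"
    using ann_anti[OF plusx_sub[OF J x]] plusx_self[OF J x] unfolding ann_def by blast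
  show "{a \<in> ann R J. a \<otimes> x = \<zero>} \<subseteq> ann R (plusx R J x)"
  proof
    fix a assume "a \<in> {a \<in> ann R J. a \<otimes> x = \<zero>}"
    hence a: "a \<in> carrier R" "\<forall>j\<in>J. a \<otimes> j = \<zero>" "a \<otimes> x = \<zero>" unfolding ann_def by auto
    have "\<forall>s\<in>plusx R J x. a \<otimes> s = \<zero>"
    proof
      fix s assume "s \<in> plusx R J x"
      then obtain j r where jr: "j \<in> J" "r \<in> carrier R" "s = j \<oplus> r \<otimes> x" unfolding plusx_mem by blast
      have jc: "j \<in> carrier R" using id_carr[OF J jr(1)] .
      have "a \<otimes> s = a \<otimes> j \<oplus> r \<otimes> (a \<otimes> x)"
        using jr(3) a(1) jc jr(2) x by (simp add: r_distr m_lcomm)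
      thus "a \<otimes> s = \<zero>" using a jr jc by simp
    qed
    thus "a \<in> ann R (plusx R J x)" using a(1) unfolding ann_def by blast
  qed
qed

lemma ann_ideal': "ideal J R \<Longrightarrow> ideal (ann R J) R"
  using ann_ideal id_carr by blast

lemma ann_step: assumes e: "elem R M J J'"
  shows "ann R J' = ann R J \<or> elem R M (ann R J') (ann R J)"
proof -
  obtain x where x: "x \<in> carrier R" "x \<notin> J" "\<forall>m\<in>M. x \<otimes> m \<in> J" "J' = plusx R J x" and J: "ideal J R"
    using e unfolding elem_def by blast
  have J': "ideal J' R" using elem_ideal[OF e] .
  have AJ: "ideal (ann R J) R" using ann_ideal'[OF J] .
  have AJ': "ideal (ann R J') R" using ann_ideal'[OF J'] .
  have eqJ': "ann R J' = {a \<in> ann R J. a \<otimes> x = \<zero>}" using ann_plusx[OF J x(1)] x(4) by simp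
  show ?thesis
  proof (cases "ann R J' = ann R J")
    case True thus ?thesis by simp
  next
    case False
    then obtain z where z: "z \<in> ann R J" "z \<notin> ann R J'" using ann_anti[OF elem_sub[OF e]] by blast
    have zc: "z \<in> carrier R" using z ann_carr by blast
    have zx: "z \<otimes> x \<noteq> \<zero>" using z eqJ' by blast
    have socx: "a \<otimes> x \<in> ann R M" if a: "a \<in> ann R J" for a
    proof -
      have ac: "a \<in> carrier R" using a ann_carr by blast
      have "\<forall>m\<in>M. (a \<otimes> x) \<otimes> m = \<zero>"
      proof
        fix m assume m: "m \<in> M"
        have "(a \<otimes> x) \<otimes> m = a \<otimes> (x \<otimes> m)" using ac x(1) m M_carr by (simp add: m_assoc subset_iff)
        thus "(a \<otimes> x) \<otimes> m = \<zero>" using a x(3) m unfolding ann_def by simp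
      qed
      thus ?thesis using ac x(1) unfolding ann_def by simp
    qed
    have "ann R J = plusx R (ann R J') z"
    proof
      show "plusx R (ann R J') z \<subseteq> ann R J"
        using plusx_min[OF AJ ann_anti[OF elem_sub[OF e]] z(1)] .
      show "ann R J \<subseteq> plusx R (ann R J') z"
      proof
        fix a assume a: "a \<in> ann R J"
        have ac: "a \<in> carrier R" using a ann_carr by blast
        obtain c where c: "c \<in> carrier R" "a \<otimes> x = c \<otimes> (z \<otimes> x)"
          using soc_gen[OF socx[OF a] socx[OF z(1)] zx] by blast
        define b where "b = a \<ominus> c \<otimes> z"
        have bJ: "b \<in> ann R J" unfolding b_def using id_minus[OF AJ a id_lmult[OF AJ z(1) c(1)]] .
        have "b \<otimes> x = a \<otimes> x \<ominus> c \<otimes> (z \<otimes> x)" unfolding b_def using ac c(1) zc x(1)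
          by (simp add: minus_eq l_distr l_minus m_assoc)
        hence "b \<otimes> x = \<zero>" using c(2) ac c(1) zc x(1) by (simp add: minus_eq r_neg)
        hence bJ': "b \<in> ann R J'" using eqJ' bJ by blast
        have bc: "b \<in> carrier R" using bJ ann_carr by blast
        have "a = b \<oplus> c \<otimes> z" unfolding b_def using ac c(1) zc
          by (simp add: minus_eq a_assoc l_neg)
        thus "a \<in> plusx R (ann R J') z" using bJ' c(1) unfolding plusx_mem by blast
      qed
    qed
    moreover have "\<forall>m\<in>M. z \<otimes> m \<in> ann R J'"
    proof
      fix m assume m: "m \<in> M"
      have mc: "m \<in> carrier R" using m M_carr by blast
      have "z \<otimes> m \<in> ann R J" using id_rmult[OF AJ z(1) mc] .
      moreover have "(z \<otimes> m) \<otimes> x = (z \<otimes> x) \<otimes> m" using zc mc x(1) by (simp add: m_assoc m_comm[of m])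
      moreover have "(z \<otimes> x) \<otimes> m = \<zero>" using socx[OF z(1)] m unfolding ann_def by blast
      ultimately show "z \<otimes> m \<in> ann R J'" using eqJ' by simp
    qed
    ultimately show ?thesis using AJ' zc z(2) unfolding elem_def by blast
  qed
qed

lemma colen_ann_step: assumes e: "elem R M J J'"
  shows "colen R M (ann R J) \<le> colen R M (ann R J')" "colen R M (ann R J') \<le> Suc (colen R M (ann R J))"
proof -
  have J: "ideal J R" using e unfolding elem_def by blast
  have J': "ideal J' R" using elem_ideal[OF e] .
  show "colen R M (ann R J) \<le> colen R M (ann R J')"
    using colen_anti(1)[OF ann_ideal'[OF J'] ann_ideal'[OF J] ann_anti[OF elem_sub[OF e]]] .
  show "colen R M (ann R J') \<le> Suc (colen R M (ann R J))"
    using ann_step[OF e] colen_elem by fastforce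
qed

lemma chain_tail: assumes "chainup R M J (Suc n)" shows "\<exists>K. elem R M J K \<and> chainup R M K n"
proof -
  obtain f where f: "f 0 = J" "f (Suc n) = carrier R" "\<forall>i<Suc n. elem R M (f i) (f (Suc i))"
    using assms unfolding chainup_def by blast
  have "chainup R M (f 1) n" unfolding chainup_def
    using f by (intro exI[of _ "\<lambda>i. f (Suc i)"]) auto
  moreover have "elem R M J (f 1)" using f by auto
  ultimately show ?thesis by blast
qed

lemma lower_aux: "\<And>J. chainup R M J n \<Longrightarrow> colen R M {\<zero>} \<le> colen R M (ann R J) + n"
proof (induct n)
  case 0
  hence "J = carrier R" unfolding chainup_def by auto
  thus ?case using ann_carrier by simp
next
  case (Suc n)
  then obtain K where K: "elem R M J K" "chainup R M K n" using chain_tail by blast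
  show ?case using Suc(1)[OF K(2)] colen_ann_step(2)[OF K(1)] by simp
qed

lemma lower: "ideal J R \<Longrightarrow> colen R M {\<zero>} \<le> colen R M (ann R J) + colen R M J"
  using lower_aux colen_chain by blast

lemma step_y: assumes e: "elem R M F F'" and y: "y \<in> F'" "y \<notin> F"
  shows "F' = plusx R F y" "\<forall>m\<in>M. y \<otimes> m \<in> F"
proof -
  obtain x where x: "x \<in> carrier R" "x \<notin> F" "\<forall>m\<in>M. x \<otimes> m \<in> F" "F' = plusx R F x" and F: "ideal F R"
    using e unfolding elem_def by blast
  have F': "ideal F' R" using elem_ideal[OF e] .
  have yc: "y \<in> carrier R" using id_carr[OF F' y(1)] .
  have L: "ideal (plusx R F y) R" using plusx_ideal[OF F yc] .
  have "plusx R F y = F \<or> plusx R F y = F'"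
    using elem_simple[OF e L plusx_sub[OF F yc] plusx_min[OF F' elem_sub[OF e] y(1)]] .
  thus "F' = plusx R F y" using plusx_self[OF F yc] y(2) by auto
  show "\<forall>m\<in>M. y \<otimes> m \<in> F"
  proof
    fix m assume m: "m \<in> M"
    have mc: "m \<in> carrier R" using m M_carr by blast
    have "y \<in> plusx R F x" using y(1) x(4) by simp
    then obtain j r where jr: "j \<in> F" "r \<in> carrier R" "y = j \<oplus> r \<otimes> x" unfolding plusx_mem by blast
    have jc: "j \<in> carrier R" using id_carr[OF F jr(1)] .
    have "y \<otimes> m = j \<otimes> m \<oplus> r \<otimes> (x \<otimes> m)" using jr jc mc x(1) by (simp add: l_distr m_assoc)
    moreover have "j \<otimes> m \<in> F" using id_rmult[OF F jr(1) mc] .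
    moreover have "r \<otimes> (x \<otimes> m) \<in> F" using id_lmult[OF F _ jr(2)] x(3) m by blast
    ultimately show "y \<otimes> m \<in> F" using id_add[OF F] by simp
  qed
qed

lemma upper: assumes J: "ideal J R" shows "colen R M (ann R J) + colen R M J \<le> colen R M {\<zero>}"
proof -
  define L where "L = colen R M {\<zero>}"
  obtain f where f: "f 0 = {\<zero>}" "f L = carrier R" "\<forall>i<L. elem R M (f i) (f (Suc i))"
    using colen_chain[OF zeroideal] unfolding chainup_def L_def by blast
  have fid: "ideal (f i) R" if "i \<le> L" for i
  proof (cases "i < L")
    case True
    hence "elem R M (f i) (f (Suc i))" using f(3) by blast
    thus ?thesis by (simp add: elem_def)
  next
    case False thus ?thesis using that f(2) oneideal by simp
  qed
  define h where "h i = J \<inter> f i" for i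
  define g where "g i = J <+>\<^bsub>R\<^esub> f i" for i
  have "i \<le> L \<Longrightarrow> colen R M (ann R (h i)) + colen R M J \<le> i + colen R M (g i)" for i
  proof (induct i)
    case 0
    have "h 0 = {\<zero>}" unfolding h_def using f(1) id_zero[OF J] by auto
    moreover have "g 0 = J" unfolding g_def using f(1) sum_sub[OF zeroideal J] id_zero[OF J] by simp
    ultimately show ?case using ann_zero colen_carrier by simp
  next
    case (Suc i)
    have iL: "i < L" using Suc(2) by simp
    have e: "elem R M (f i) (f (Suc i))" using f(3) iL by blast
    have fi: "ideal (f i) R" using fid iL by simp
    have fsi: "ideal (f (Suc i)) R" using fid Suc(2) by simp
    have IH: "colen R M (ann R (h i)) + colen R M J \<le> i + colen R M (g i)" using Suc iL by simp
    show ?case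
    proof (cases "h (Suc i) = h i")
      case True
      have "g (Suc i) = g i \<or> elem R M (g i) (g (Suc i))" unfolding g_def using sum_step[OF J e] by auto
      hence "colen R M (g i) \<le> Suc (colen R M (g (Suc i)))" using colen_elem by fastforce
      thus ?thesis using IH True by simp
    next
      case False
      have hsub: "h i \<subseteq> h (Suc i)" unfolding h_def using elem_sub[OF e] by blast
      then obtain y where y: "y \<in> J" "y \<in> f (Suc i)" "y \<notin> f i" using False unfolding h_def by blast
      have yc: "y \<in> carrier R" using id_carr[OF J y(1)] .
      have fy: "f (Suc i) = plusx R (f i) y" "\<forall>m\<in>M. y \<otimes> m \<in> f i" using step_y[OF e y(2,3)] by auto
      have hi: "ideal (h i) R" unfolding h_def using i_intersect[OF J fi] .
      have hsi: "ideal (h (Suc i)) R" unfolding h_def using i_intersect[OF J fsi] .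
      have "h (Suc i) = plusx R (h i) y"
      proof
        show "plusx R (h i) y \<subseteq> h (Suc i)" using plusx_min[OF hsi hsub] y unfolding h_def by blast
        show "h (Suc i) \<subseteq> plusx R (h i) y"
        proof
          fix w assume w: "w \<in> h (Suc i)"
          hence wJ: "w \<in> J" and "w \<in> plusx R (f i) y" unfolding h_def using fy(1) by auto
          then obtain j r where jr: "j \<in> f i" "r \<in> carrier R" "w = j \<oplus> r \<otimes> y" unfolding plusx_mem by blast
          have jc: "j \<in> carrier R" using id_carr[OF fi jr(1)] .
          have "j = w \<ominus> r \<otimes> y" using jr jc yc by (simp add: minus_eq a_assoc r_neg)
          hence "j \<in> J" using id_minus[OF J wJ id_lmult[OF J y(1) jr(2)]] by simp
          hence "j \<in> h i" unfolding h_def using jr(1) by blast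
          thus "w \<in> plusx R (h i) y" using jr unfolding plusx_mem by blast
        qed
      qed
      moreover have "\<forall>m\<in>M. y \<otimes> m \<in> h i"
        unfolding h_def using fy(2) id_rmult[OF J y(1)] M_carr by blast
      moreover have "y \<notin> h i" unfolding h_def using y by blast
      ultimately have eh: "elem R M (h i) (h (Suc i))" unfolding elem_def using hi yc by blast
      have "g (Suc i) \<subseteq> g i" unfolding g_def
      proof (rule sum_min[OF add_ideals[OF J fi] sum_right[OF fi J]])
        show "f (Suc i) \<subseteq> J <+>\<^bsub>R\<^esub> f i"
          unfolding fy(1) using plusx_min[OF add_ideals[OF J fi] sum_left[OF fi J]] y(1) sum_right[OF fi J] by blast
      qed
      moreover have "g i \<subseteq> g (Suc i)" unfolding g_def using elem_sub[OF e] unfolding set_add_def' by blast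
      ultimately have "g i = g (Suc i)" by blast
      thus ?thesis using IH colen_ann_step(2)[OF eh] by simp
    qed
  qed
  hence "colen R M (ann R (h L)) + colen R M J \<le> L + colen R M (g L)" by simp
  moreover have "h L = J" unfolding h_def using f(2) id_carr[OF J] by blast
  moreover have "g L = carrier R" unfolding g_def using f(2) sum_carrier[OF J] by simp
  ultimately show ?thesis using colen_carrier unfolding L_def by simp
qed

lemma colen_ann: "ideal J R \<Longrightarrow> colen R M (ann R J) + colen R M J = colen R M {\<zero>}"
  using lower upper by (simp add: le_antisym)

lemma double_ann: assumes J: "ideal J R" shows "ann R (ann R J) = J"
proof -
  have AJ: "ideal (ann R J) R" using ann_ideal'[OF J] .
  have AAJ: "ideal (ann R (ann R J)) R" using ann_ideal'[OF AJ] .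
  have "colen R M (ann R (ann R J)) = colen R M J"
    using colen_ann[OF J] colen_ann[OF AJ] by simp
  moreover have "J \<subseteq> carrier R" using id_carr[OF J] by blast
  ultimately show ?thesis using colen_eq[OF J AAJ ann_ann_sup] by simp
qed

end


locale GAQ = GA + fixes I assumes I_ideal: "ideal I R" and I_proper: "I \<noteq> carrier R"
begin

lemma I_carr: "a \<in> I \<Longrightarrow> a \<in> carrier R" using id_carr[OF I_ideal] .

lemma I_sub_M: "I \<subseteq> M"
proof
  fix a assume a: "a \<in> I"
  show "a \<in> M"
  proof (rule ccontr)
    assume "a \<notin> M"
    hence "a \<in> Units R" using nonM_unit I_carr[OF a] by blast
    then obtain w where w: "w \<in> carrier R" "w \<otimes> a = \<one>" unfolding Units_def by blast
    hence "\<one> \<in> I" using id_lmult[OF I_ideal a w(1)] by simp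
    thus False using ideal.one_imp_carrier[OF I_ideal] I_proper by blast
  qed
qed

lemma Q_carrier: "carrier (R Quot I) = (\<lambda>a. I +> a) ` carrier R"
proof -
  have "carrier (R Quot I) = a_rcosets I" unfolding FactRing_def by simp
  also have "\<dots> = (\<Union>a\<in>carrier R. {I +> a})" by (simp add: A_RCOSETS_def')
  also have "\<dots> = (\<lambda>a. I +> a) ` carrier R" by blast
  finally show ?thesis .
qed

lemma Q_zero: "\<zero>\<^bsub>R Quot I\<^esub> = I" unfolding FactRing_def by simp
lemma Q_one: "\<one>\<^bsub>R Quot I\<^esub> = I +> \<one>" unfolding FactRing_def by simp

lemma Q_hom: "(\<lambda>a. I +> a) \<in> ring_hom R (R Quot I)"
  using ideal.rcos_ring_hom[OF I_ideal] by simp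

lemma Q_mult: "a \<in> carrier R \<Longrightarrow> b \<in> carrier R \<Longrightarrow> (I +> a) \<otimes>\<^bsub>R Quot I\<^esub> (I +> b) = I +> (a \<otimes> b)"
  using ring_hom_mult[OF Q_hom] by simp

lemma Q_add: "a \<in> carrier R \<Longrightarrow> b \<in> carrier R \<Longrightarrow> (I +> a) \<oplus>\<^bsub>R Quot I\<^esub> (I +> b) = I +> (a \<oplus> b)"
  using ring_hom_add[OF Q_hom] by simp

lemma Q_cring: "cring (R Quot I)" using ideal.quotient_is_cring[OF I_ideal is_cring] .
lemma Q_ring: "ring (R Quot I)" using ideal.quotient_is_ring[OF I_ideal] .

lemma coset_mem: "x \<in> I +> a \<longleftrightarrow> (\<exists>h\<in>I. x = h \<oplus> a)"
  unfolding a_r_coset_def' by blast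

lemma coset_zero: assumes a: "a \<in> carrier R" shows "I +> a = I \<longleftrightarrow> a \<in> I"
proof
  assume "I +> a = I"
  moreover have "a \<in> I +> a" using a id_zero[OF I_ideal] unfolding coset_mem by (intro bexI[of _ \<zero>]) auto
  ultimately show "a \<in> I" by simp
next
  assume "a \<in> I"
  thus "I +> a = I" using a_rcos_zero[OF I_ideal] by blast
qed

lemma coset_eq: assumes a: "a \<in> carrier R" and b: "b \<in> carrier R"
  shows "I +> a = I +> b \<longleftrightarrow> a \<ominus> b \<in> I"
proof
  assume eq: "I +> a = I +> b"
  have "a \<in> I +> a" using a id_zero[OF I_ideal] unfolding coset_mem by (intro bexI[of _ \<zero>]) auto
  hence "a \<in> I +> b" using eq by simp
  then obtain h where h: "h \<in> I" "a = h \<oplus> b" unfolding coset_mem by auto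
  have "a \<ominus> b = h" using h I_carr[OF h(1)] b by (simp add: minus_eq a_assoc r_neg)
  thus "a \<ominus> b \<in> I" using h by simp
next
  assume ab: "a \<ominus> b \<in> I"
  have "I +> a = I +> ((a \<ominus> b) \<oplus> b)" using a b by (simp add: minus_eq a_assoc l_neg)
  also have "\<dots> = (I +> (a \<ominus> b)) \<oplus>\<^bsub>R Quot I\<^esub> (I +> b)" using Q_add a b by simp
  also have "\<dots> = I \<oplus>\<^bsub>R Quot I\<^esub> (I +> b)"
  proof -
    have "I +> (a \<ominus> b) = I" using coset_zero[of "a \<ominus> b"] ab a b by simp
    thus ?thesis by simp
  qed
  also have "\<dots> = (I +> \<zero>) \<oplus>\<^bsub>R Quot I\<^esub> (I +> b)" using coset_zero[of \<zero>] id_zero[OF I_ideal] by simp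
  also have "\<dots> = I +> b" using Q_add[of \<zero> b] b by simp
  finally show "I +> a = I +> b" .
qed

lemma img_ideal: "ideal N R \<Longrightarrow> ideal ((\<lambda>a. I +> a) ` N) (R Quot I)"
  by (rule ring_ideal_imp_quot_ideal[OF I_ideal])

lemma img_prod: assumes N: "ideal N R" and N': "ideal N' R"
  shows "ideal_prod (R Quot I) ((\<lambda>a. I +> a) ` N) ((\<lambda>a. I +> a) ` N') = (\<lambda>a. I +> a) ` (ideal_prod R N N')"
proof
  show "ideal_prod (R Quot I) ((\<lambda>a. I +> a) ` N) ((\<lambda>a. I +> a) ` N') \<subseteq> (\<lambda>a. I +> a) ` (ideal_prod R N N')"
  proof
    fix U assume "U \<in> ideal_prod (R Quot I) ((\<lambda>a. I +> a) ` N) ((\<lambda>a. I +> a) ` N')"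
    thus "U \<in> (\<lambda>a. I +> a) ` (ideal_prod R N N')"
    proof (induct U rule: ideal_prod.induct)
      case (prod U V)
      then obtain a b where ab: "a \<in> N" "b \<in> N'" "U = I +> a" "V = I +> b" by blast
      have "U \<otimes>\<^bsub>R Quot I\<^esub> V = I +> (a \<otimes> b)" using ab Q_mult id_carr[OF N] id_carr[OF N'] by simp
      moreover have "a \<otimes> b \<in> ideal_prod R N N'" using ideal_prod.prod[OF ab(1,2)] .
      ultimately show ?case by blast
    next
      case (sum U V)
      then obtain a b where ab: "a \<in> ideal_prod R N N'" "b \<in> ideal_prod R N N'" "U = I +> a" "V = I +> b" by blast
      have c: "a \<in> carrier R" "b \<in> carrier R" using ab ideal_prod_in_carrier[OF N N'] by auto
      have "U \<oplus>\<^bsub>R Quot I\<^esub> V = I +> (a \<oplus> b)" using ab Q_add c by simp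
      moreover have "a \<oplus> b \<in> ideal_prod R N N'" using ideal_prod.sum[OF ab(1,2)] .
      ultimately show ?case by blast
    qed
  qed
  show "(\<lambda>a. I +> a) ` (ideal_prod R N N') \<subseteq> ideal_prod (R Quot I) ((\<lambda>a. I +> a) ` N) ((\<lambda>a. I +> a) ` N')"
  proof
    fix U assume "U \<in> (\<lambda>a. I +> a) ` (ideal_prod R N N')"
    then obtain s where s: "s \<in> ideal_prod R N N'" "U = I +> s" by blast
    have "I +> s \<in> ideal_prod (R Quot I) ((\<lambda>a. I +> a) ` N) ((\<lambda>a. I +> a) ` N')" using s(1)
    proof (induct s rule: ideal_prod.induct)
      case (prod a b)
      have "I +> (a \<otimes> b) = (I +> a) \<otimes>\<^bsub>R Quot I\<^esub> (I +> b)"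
        using Q_mult id_carr[OF N prod(1)] id_carr[OF N' prod(2)] by simp
      moreover have "(I +> a) \<otimes>\<^bsub>R Quot I\<^esub> (I +> b) \<in> ideal_prod (R Quot I) ((\<lambda>a. I +> a) ` N) ((\<lambda>a. I +> a) ` N')"
        by (rule ideal_prod.prod) (use prod in auto)
      ultimately show ?case by simp
    next
      case (sum a b)
      have c: "a \<in> carrier R" "b \<in> carrier R" using sum ideal_prod_in_carrier[OF N N'] by auto
      have "I +> (a \<oplus> b) = (I +> a) \<oplus>\<^bsub>R Quot I\<^esub> (I +> b)" using Q_add c by simp
      moreover have "(I +> a) \<oplus>\<^bsub>R Quot I\<^esub> (I +> b) \<in> ideal_prod (R Quot I) ((\<lambda>a. I +> a) ` N) ((\<lambda>a. I +> a) ` N')"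
        by (rule ideal_prod.sum) (use sum(2) sum(4) in auto)
      ultimately show ?case by simp
    qed
    thus "U \<in> ideal_prod (R Quot I) ((\<lambda>a. I +> a) ` N) ((\<lambda>a. I +> a) ` N')" using s by simp
  qed
qed

lemma img_pow: "ideal_pow (R Quot I) ((\<lambda>a. I +> a) ` M) r = (\<lambda>a. I +> a) ` (ideal_pow R M r)"
proof (induct r)
  case 0 show ?case using Q_carrier by simp
next
  case (Suc r) show ?case using Suc img_prod[OF M_ideal pow_ideal] by simp
qed

lemma img_zero_iff: assumes N: "ideal N R" shows "(\<lambda>a. I +> a) ` N = {I} \<longleftrightarrow> N \<subseteq> I"
proof
  assume eq: "(\<lambda>a. I +> a) ` N = {I}"
  show "N \<subseteq> I"
  proof
    fix a assume a: "a \<in> N"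
    hence "I +> a = I" using eq by blast
    thus "a \<in> I" using coset_zero[OF id_carr[OF N a]] by simp
  qed
next
  assume sub: "N \<subseteq> I"
  have "\<And>a. a \<in> N \<Longrightarrow> I +> a = I"
  proof -
    fix a assume a: "a \<in> N"
    show "I +> a = I" using coset_zero[OF id_carr[OF N a]] sub a by blast
  qed
  moreover have "\<zero> \<in> N" using id_zero[OF N] .
  ultimately show "(\<lambda>a. I +> a) ` N = {I}" by force
qed

lemma Union_mem: assumes J: "J \<subseteq> carrier (R Quot I)" and a: "a \<in> carrier R"
  shows "a \<in> \<Union>J \<longleftrightarrow> I +> a \<in> J"
  using canonical_proj_vimage_mem_iff[OF I_ideal J a] .

lemma QM_max: "maximalideal ((\<lambda>a. I +> a) ` M) (R Quot I)"
proof -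
  have id: "ideal ((\<lambda>a. I +> a) ` M) (R Quot I)" using img_ideal[OF M_ideal] .
  have ne: "carrier (R Quot I) \<noteq> (\<lambda>a. I +> a) ` M"
  proof
    assume "carrier (R Quot I) = (\<lambda>a. I +> a) ` M"
    moreover have "I +> \<one> \<in> (\<lambda>a. I +> a) ` carrier R" by simp
    ultimately have "I +> \<one> \<in> (\<lambda>a. I +> a) ` M" by (simp add: Q_carrier)
    then obtain m where m: "m \<in> M" "I +> \<one> = I +> m" by blast
    have mc: "m \<in> carrier R" using m M_carr by blast
    have "\<one> \<ominus> m \<in> I" using coset_eq[OF one_closed mc] m(2) by simp
    hence "\<one> \<ominus> m \<in> M" using I_sub_M by blast
    hence "(\<one> \<ominus> m) \<oplus> m \<in> M" using id_add[OF M_ideal _ m(1)] by blast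
    moreover have "(\<one> \<ominus> m) \<oplus> m = \<one>" using mc by (simp add: minus_eq a_assoc l_neg)
    ultimately show False using M_ne by simp
  qed
  show ?thesis
  proof (rule maximalidealI[OF id ne])
    fix J assume J: "ideal J (R Quot I)" "(\<lambda>a. I +> a) ` M \<subseteq> J" "J \<subseteq> carrier (R Quot I)"
    have UJ: "ideal (\<Union>J) R" using quot_ideal_imp_ring_ideal[OF I_ideal J(1)] .
    have MU: "M \<subseteq> \<Union>J"
    proof
      fix m assume m: "m \<in> M"
      have mc: "m \<in> carrier R" using m M_carr by blast
      have "I +> m \<in> J" using J(2) m by blast
      thus "m \<in> \<Union>J" using Union_mem[OF J(3) mc] by simp
    qed
    have UJc: "\<Union>J \<subseteq> carrier R" using id_carr[OF UJ] by blast
    have "\<Union>J = M \<or> \<Union>J = carrier R"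
      using maximalideal.I_maximal[OF M_max UJ MU UJc] .
    thus "J = (\<lambda>a. I +> a) ` M \<or> J = carrier (R Quot I)"
    proof
      assume Ueq: "\<Union>J = M"
      have "J \<subseteq> (\<lambda>a. I +> a) ` M"
      proof
        fix Z assume Z: "Z \<in> J"
        hence "Z \<in> carrier (R Quot I)" using J(3) by blast
        hence "Z \<in> (\<lambda>a. I +> a) ` carrier R" by (simp add: Q_carrier)
        then obtain a where a: "a \<in> carrier R" "Z = I +> a" by blast
        hence "a \<in> \<Union>J" using Union_mem[OF J(3) a(1)] Z by simp
        hence "a \<in> M" using Ueq by simp
        thus "Z \<in> (\<lambda>a. I +> a) ` M" using a(2) by blast
      qed
      thus ?thesis using J(2) by blast
    next
      assume "\<Union>J = carrier R"
      hence "I +> \<one> \<in> J" using Union_mem[OF J(3), of \<one>] by simp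
      hence "\<one>\<^bsub>R Quot I\<^esub> \<in> J" using Q_one by simp
      thus ?thesis using ideal.one_imp_carrier[OF J(1)] by blast
    qed
  qed
qed

lemma QM_uniq: assumes N: "maximalideal N (R Quot I)" shows "N = (\<lambda>a. I +> a) ` M"
proof -
  have Nid: "ideal N (R Quot I)" using maximalideal.axioms(1)[OF N] .
  have Nc: "N \<subseteq> carrier (R Quot I)" using ideal.Icarr[OF Nid] by blast
  have UN: "ideal (\<Union>N) R" using quot_ideal_imp_ring_ideal[OF I_ideal Nid] .
  have "\<one> \<notin> \<Union>N"
  proof
    assume "\<one> \<in> \<Union>N"
    hence "\<one>\<^bsub>R Quot I\<^esub> \<in> N" using Union_mem[OF Nc, of \<one>] Q_one by simp
    thus False using ideal.one_imp_carrier[OF Nid] maximalideal.I_notcarr[OF N] by simp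
  qed
  have UM: "\<Union>N \<subseteq> M"
  proof
    fix a assume a: "a \<in> \<Union>N"
    show "a \<in> M"
    proof (rule ccontr)
      assume "a \<notin> M"
      hence "a \<in> Units R" using nonM_unit id_carr[OF UN a] by blast
      then obtain w where w: "w \<in> carrier R" "w \<otimes> a = \<one>" unfolding Units_def by blast
      hence "\<one> \<in> \<Union>N" using id_lmult[OF UN a w(1)] by simp
      thus False using \<open>\<one> \<notin> \<Union>N\<close> by simp
    qed
  qed
  have sub: "N \<subseteq> (\<lambda>a. I +> a) ` M"
  proof
    fix U assume U: "U \<in> N"
    hence "U \<in> carrier (R Quot I)" using Nc by blast
    hence "U \<in> (\<lambda>a. I +> a) ` carrier R" by (simp add: Q_carrier)
    then obtain a where a: "a \<in> carrier R" "U = I +> a" by blast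
    hence "a \<in> \<Union>N" using Union_mem[OF Nc a(1)] U by simp
    thus "U \<in> (\<lambda>a. I +> a) ` M" using UM a by blast
  qed
  have QMc: "(\<lambda>a. I +> a) ` M \<subseteq> carrier (R Quot I)" using Q_carrier M_carr by blast
  have "(\<lambda>a. I +> a) ` M = N \<or> (\<lambda>a. I +> a) ` M = carrier (R Quot I)"
    using maximalideal.I_maximal[OF N img_ideal[OF M_ideal] sub QMc] .
  thus ?thesis using maximalideal.I_notcarr[OF QM_max] by auto
qed

lemma Q_max_ideal: "max_ideal (R Quot I) = (\<lambda>a. I +> a) ` M"
  unfolding max_ideal_def using QM_max QM_uniq by (rule the_equality)

lemma Q_exponent: "exponent (R Quot I) = (LEAST r. ideal_pow R M r \<subseteq> I)"
  unfolding exponent_def Q_max_ideal img_pow Q_zero using img_zero_iff[OF pow_ideal] by simp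

lemma Q_exponent_ge1: "(LEAST r. ideal_pow R M r \<subseteq> I) \<ge> 1"
proof -
  have "ideal_pow R M (Suc t) \<subseteq> I" using Mnil id_zero[OF I_ideal] by simp
  hence "ideal_pow R M (LEAST r. ideal_pow R M r \<subseteq> I) \<subseteq> I" by (rule LeastI)
  moreover have "\<not> ideal_pow R M 0 \<subseteq> I" using I_proper id_carr[OF I_ideal] by auto
  ultimately show ?thesis by (cases "(LEAST r. ideal_pow R M r \<subseteq> I)") auto
qed

lemma Q_exponent_eq: assumes "ideal_pow R M r \<subseteq> I" "\<And>s. s < r \<Longrightarrow> \<not> ideal_pow R M s \<subseteq> I"
  shows "exponent (R Quot I) = r"
  unfolding Q_exponent
proof (rule Least_equality)
  show "ideal_pow R M r \<subseteq> I" by (rule assms(1))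
  fix y assume y: "ideal_pow R M y \<subseteq> I"
  show "r \<le> y"
  proof (rule ccontr)
    assume "\<not> r \<le> y" hence "y < r" by simp
    thus False using assms(2) y by blast
  qed
qed

lemma Q_exponent_le: assumes "ideal_pow R M r \<subseteq> I" shows "exponent (R Quot I) \<le> r"
  unfolding Q_exponent using assms by (rule Least_le)

lemma Q_exponent_prop: "ideal_pow R M (exponent (R Quot I)) \<subseteq> I"
proof -
  have "ideal_pow R M (Suc t) \<subseteq> I" using Mnil id_zero[OF I_ideal] by simp
  thus ?thesis unfolding Q_exponent by (rule LeastI)
qed

end


context GA begin

lemma unit_cancel: assumes u: "u \<in> Units R" and a: "a \<in> carrier R" and e: "u \<otimes> a = \<zero>" shows "a = \<zero>"
proof -
  obtain w where w: "w \<in> carrier R" "w \<otimes> u = \<one>" using u unfolding Units_def by blast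
  have uc: "u \<in> carrier R" using u unfolding Units_def by blast
  have "(w \<otimes> u) \<otimes> a = a" using w a by simp
  hence "a = (w \<otimes> u) \<otimes> a" by simp
  also have "\<dots> = w \<otimes> (u \<otimes> a)" using m_assoc[OF w(1) uc a] .
  finally show ?thesis using e w by simp
qed

lemma unit_ann: assumes u: "u \<in> Units R" and z: "z \<in> carrier R"
  shows "{a \<in> carrier R. a \<otimes> (u \<otimes> z) = \<zero>} = {a \<in> carrier R. a \<otimes> z = \<zero>}"
proof -
  have uc: "u \<in> carrier R" using u unfolding Units_def by blast
  have "a \<otimes> (u \<otimes> z) = u \<otimes> (a \<otimes> z)" if "a \<in> carrier R" for a using that uc z by (simp add: m_lcomm)
  thus ?thesis using unit_cancel[OF u] z uc by auto
qed

lemma part2: assumes G: "gorenstein_ideal R I" and ex: "exponent (R Quot I) = t"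
  shows "\<exists>y \<in> M - ideal_pow R M 2. ann R I = PIdl y"
proof -
  have I: "ideal I R" and Ip: "I \<noteq> carrier R" and GQ: "gorenstein_artinian (R Quot I)"
    using G unfolding gorenstein_ideal_def by auto
  interpret Q: GAQ R M t v I using GA_axioms I Ip by (simp add: GAQ_def GAQ_axioms_def)
  obtain w where w: "w \<in> carrier (R Quot I)" "w \<noteq> \<zero>\<^bsub>R Quot I\<^esub>"
    "ann (R Quot I) (max_ideal (R Quot I)) = cgenideal (R Quot I) w"
    using GQ unfolding gorenstein_artinian_def by blast
  have wann: "ann (R Quot I) ((\<lambda>a. I +> a) ` M) = cgenideal (R Quot I) w"
    using w(3) Q.Q_max_ideal by simp
  have "w \<in> (\<lambda>a. I +> a) ` carrier R" using w(1) Q.Q_carrier by simp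
  then obtain u where u: "u \<in> carrier R" "w = I +> u" by blast
  have uI: "u \<notin> I" using w(2) u Q.coset_zero Q.Q_zero by simp
  have "w \<in> cgenideal (R Quot I) w" using ring.cgenideal_self[OF Q.Q_ring w(1)] .
  hence wa: "w \<in> ann (R Quot I) ((\<lambda>a. I +> a) ` M)" using wann by simp
  have uM: "\<forall>m\<in>M. u \<otimes> m \<in> I"
  proof
    fix m assume m: "m \<in> M"
    have mc: "m \<in> carrier R" using m M_carr by blast
    have "w \<otimes>\<^bsub>R Quot I\<^esub> (I +> m) = \<zero>\<^bsub>R Quot I\<^esub>" using wa m unfolding ann_def by blast
    hence "I +> (u \<otimes> m) = I" using Q.Q_mult[OF u(1) mc] u(2) Q.Q_zero by simp
    thus "u \<otimes> m \<in> I" using Q.coset_zero mc u(1) by simp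
  qed
  have socQ: "\<exists>r\<in>carrier R. a \<ominus> r \<otimes> u \<in> I" if a: "a \<in> carrier R" "\<forall>m\<in>M. a \<otimes> m \<in> I" for a
  proof -
    have "I +> a \<in> ann (R Quot I) ((\<lambda>a. I +> a) ` M)"
    proof -
      have "\<forall>s\<in>(\<lambda>a. I +> a) ` M. (I +> a) \<otimes>\<^bsub>R Quot I\<^esub> s = \<zero>\<^bsub>R Quot I\<^esub>"
      proof
        fix s assume "s \<in> (\<lambda>a. I +> a) ` M"
        then obtain m where m: "m \<in> M" "s = I +> m" by blast
        have mc: "m \<in> carrier R" using m M_carr by blast
        have "(I +> a) \<otimes>\<^bsub>R Quot I\<^esub> s = I +> (a \<otimes> m)" using Q.Q_mult[OF a(1) mc] m by simp
        also have "\<dots> = I" using Q.coset_zero a m mc by simp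
        finally show "(I +> a) \<otimes>\<^bsub>R Quot I\<^esub> s = \<zero>\<^bsub>R Quot I\<^esub>" using Q.Q_zero by simp
      qed
      moreover have "I +> a \<in> carrier (R Quot I)" using Q.Q_carrier a(1) by simp
      ultimately show ?thesis unfolding ann_def by blast
    qed
    hence "I +> a \<in> cgenideal (R Quot I) w" using wann by simp
    then obtain U where U: "U \<in> carrier (R Quot I)" "I +> a = U \<otimes>\<^bsub>R Quot I\<^esub> w"
      unfolding cgenideal_def by blast
    have "U \<in> (\<lambda>a. I +> a) ` carrier R" using U(1) Q.Q_carrier by simp
    then obtain r where r: "r \<in> carrier R" "U = I +> r" by blast
    have "I +> a = I +> (r \<otimes> u)" using U(2) r u Q.Q_mult by simp
    hence "a \<ominus> r \<otimes> u \<in> I" using Q.coset_eq a(1) r(1) u(1) by simp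
    thus ?thesis using r(1) by blast
  qed
  define J where "J = ann R I"
  have Icarr: "I \<subseteq> carrier R" using id_carr[OF I] by blast
  have IJ: "I = ann R J" unfolding J_def using double_ann[OF I] by simp
  have "u \<notin> ann R J" using uI IJ by simp
  then obtain z where z: "z \<in> J" "u \<otimes> z \<noteq> \<zero>" using u(1) unfolding ann_def by blast
  have zc: "z \<in> carrier R" using z(1) ann_carr unfolding J_def by blast
  have zI: "\<And>i. i \<in> I \<Longrightarrow> i \<otimes> z = \<zero>"
  proof -
    fix i assume i: "i \<in> I"
    have "z \<otimes> i = \<zero>" using z(1) i unfolding J_def ann_def by blast
    thus "i \<otimes> z = \<zero>" using i Icarr zc by (simp add: m_comm subset_iff)
  qed
  have annz: "ann R (PIdl z) = I"
  proof
    show "I \<subseteq> ann R (PIdl z)" using ann_PIdl[OF zc] zI Icarr by blast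
    show "ann R (PIdl z) \<subseteq> I"
    proof
      fix a assume "a \<in> ann R (PIdl z)"
      hence a: "a \<in> carrier R" "a \<otimes> z = \<zero>" using ann_PIdl[OF zc] by auto
      show "a \<in> I"
      proof (rule ccontr)
        assume aI: "a \<notin> I"
        obtain b where b: "b \<in> carrier R" "a \<otimes> b \<notin> I" "\<forall>m\<in>M. (a \<otimes> b) \<otimes> m \<in> I"
          using push_down[OF I a(1) aI] by blast
        have abc: "a \<otimes> b \<in> carrier R" using a b by simp
        obtain r where r: "r \<in> carrier R" "a \<otimes> b \<ominus> r \<otimes> u \<in> I" using socQ[OF abc b(3)] by blast
        define j where "j = a \<otimes> b \<ominus> r \<otimes> u"
        have jI: "j \<in> I" using r unfolding j_def by simp
        have jc: "j \<in> carrier R" using id_carr[OF I jI] .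
        have abj: "a \<otimes> b = j \<oplus> r \<otimes> u" unfolding j_def using abc r(1) u(1)
          by (simp add: minus_eq a_assoc l_neg)
        have "r \<notin> M"
        proof
          assume "r \<in> M"
          hence "u \<otimes> r \<in> I" using uM by blast
          hence "r \<otimes> u \<in> I" using r(1) u(1) by (simp add: m_comm)
          hence "a \<otimes> b \<in> I" using abj id_add[OF I jI] by simp
          thus False using b(2) by simp
        qed
        hence ru: "r \<in> Units R" using nonM_unit r(1) by blast
        have "(a \<otimes> b) \<otimes> z = b \<otimes> (a \<otimes> z)" using a(1) b(1) zc by (simp add: m_comm m_assoc m_lcomm)
        hence 0: "(a \<otimes> b) \<otimes> z = \<zero>" using a(2) b(1) by simp
        have "(a \<otimes> b) \<otimes> z = j \<otimes> z \<oplus> r \<otimes> (u \<otimes> z)" using abj jc r(1) u(1) zc by (simp add: l_distr m_assoc)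
        hence "r \<otimes> (u \<otimes> z) = \<zero>" using 0 zI[OF jI] r(1) u(1) zc by simp
        hence "u \<otimes> z = \<zero>" using unit_cancel[OF ru] u(1) zc by simp
        thus False using z(2) by simp
      qed
    qed
  qed
  have Jz: "J = PIdl z" unfolding J_def using annz[symmetric] double_ann[OF cgenideal_ideal[OF zc]] by simp
  have zM: "z \<in> M"
  proof (rule ccontr)
    assume "z \<notin> M"
    hence zu: "z \<in> Units R" using nonM_unit zc by blast
    then obtain w' where w': "w' \<in> carrier R" "w' \<otimes> z = \<one>" unfolding Units_def by blast
    have "\<one> \<in> PIdl z" using w' PIdl_mem[OF zc] by force
    hence "PIdl z = carrier R" using ideal.one_imp_carrier[OF cgenideal_ideal[OF zc]] by blast
    hence "I = {\<zero>}" using annz ann_carrier by simp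
    moreover have "ideal_pow R M t \<subseteq> I" using Q.Q_exponent_prop ex by simp
    moreover have "v \<in> ideal_pow R M t" using v_soc soc1 by simp
    ultimately show False using v_nz by blast
  qed
  have t1: "t \<ge> 1" using Q.Q_exponent_ge1 Q.Q_exponent ex by simp
  have zM2: "z \<notin> ideal_pow R M 2"
  proof
    assume z2: "z \<in> ideal_pow R M 2"
    have "ideal_pow R M (t - 1) \<subseteq> I"
    proof
      fix a assume a: "a \<in> ideal_pow R M (t - 1)"
      have h: "a \<otimes> z \<in> ideal_pow R M (t - 1 + 2)" using pow_mult_mem[OF a z2] .
      have "a \<otimes> z = \<zero>" by (rule pow_zero_mem[OF h]) (use t1 in arith)
      moreover have "a \<in> carrier R" using a pow_carr by blast
      ultimately show "a \<in> I" using annz ann_PIdl[OF zc] by blast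
    qed
    hence "exponent (R Quot I) \<le> t - 1" using Q.Q_exponent_le by blast
    thus False using ex t1 by simp
  qed
  show ?thesis using zM zM2 Jz unfolding J_def by blast
qed

end


context GA begin

lemma part1:
  fixes I :: "nat \<Rightarrow> 'a set" and d :: "nat \<Rightarrow> 'a"
  assumes s0: "{\<zero>} \<subset> I 1" and ss: "\<forall>i. 1 \<le> i \<and> i < t \<longrightarrow> I i \<subset> I (Suc i)"
    and dc: "\<forall>i\<in>{1..t}. d i \<in> carrier R" and vd: "v = finprod R d {1..t}"
    and Id: "\<forall>i\<in>{1..t}. I i = ann R (PIdl (finprod R d {1..i}))"
  shows "\<forall>i\<in>{1..t}. d i \<in> M - ideal_pow R M 2 \<and> exponent (R Quot I i) = t + 1 - i"
proof -
  define x where "x k = finprod R d {1..k}" for k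
  define y where "y k = finprod R d {Suc k..t}" for k
  have dF: "\<And>F. F \<subseteq> {1..t} \<Longrightarrow> d \<in> F \<rightarrow> carrier R" using dc by blast
  have xc: "\<And>k. k \<le> t \<Longrightarrow> x k \<in> carrier R"
    unfolding x_def by (rule finprod_closed, rule dF) auto
  have yc: "\<And>k. y k \<in> carrier R"
    unfolding y_def by (rule finprod_closed, rule dF) auto
  have x0: "x 0 = \<one>" unfolding x_def by simp
  have xS: "\<And>k. Suc k \<le> t \<Longrightarrow> x (Suc k) = d (Suc k) \<otimes> x k"
  proof -
    fix k assume k: "Suc k \<le> t"
    have "{1..Suc k} = insert (Suc k) {1..k}" by auto
    moreover have "d \<in> {1..k} \<rightarrow> carrier R" using dF[of "{1..k}"] k by auto
    moreover have "d (Suc k) \<in> carrier R" using dc k by auto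
    ultimately show "x (Suc k) = d (Suc k) \<otimes> x k" unfolding x_def by simp
  qed
  have vxy: "\<And>k. k \<le> t \<Longrightarrow> v = y k \<otimes> x k"
  proof -
    fix k assume k: "k \<le> t"
    have "{1..t} = {1..k} \<union> {Suc k..t}" using k by auto
    moreover have "{1..k} \<inter> {Suc k..t} = {}" by auto
    moreover have "d \<in> {1..k} \<rightarrow> carrier R" using dF[of "{1..k}"] k by auto
    moreover have "d \<in> {Suc k..t} \<rightarrow> carrier R" using dF[of "{Suc k..t}"] by auto
    ultimately have "finprod R d ({1..k} \<union> {Suc k..t}) = finprod R d {1..k} \<otimes> finprod R d {Suc k..t}"
      using finprod_Un_disjoint[of "{1..k}" "{Suc k..t}" d] by simp
    hence "v = x k \<otimes> y k" unfolding vd x_def y_def using \<open>{1..t} = {1..k} \<union> {Suc k..t}\<close> by simp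
    thus "v = y k \<otimes> x k" using xc[OF k] yc by (simp add: m_comm)
  qed
  have xnz: "\<And>k. k \<le> t \<Longrightarrow> x k \<noteq> \<zero>"
  proof
    fix k assume k: "k \<le> t" and "x k = \<zero>"
    hence "v = \<zero>" using vxy[OF k] yc by simp
    thus False using v_nz by simp
  qed
  have annx: "\<And>k. k \<le> t \<Longrightarrow> ann R (PIdl (x k)) = {a \<in> carrier R. a \<otimes> x k = \<zero>}"
    using ann_PIdl[OF xc] by simp
  have Ix: "\<And>k. k \<in> {1..t} \<Longrightarrow> I k = {a \<in> carrier R. a \<otimes> x k = \<zero>}"
  proof -
    fix k assume k: "k \<in> {1..t}"
    have "I k = ann R (PIdl (x k))" using Id k unfolding x_def by blast
    also have "\<dots> = {a \<in> carrier R. a \<otimes> x k = \<zero>}" using annx k by simp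
    finally show "I k = {a \<in> carrier R. a \<otimes> x k = \<zero>}" .
  qed
  have dM: "\<And>j. j \<in> {1..t} \<Longrightarrow> d j \<in> M"
  proof -
    fix j assume j: "j \<in> {1..t}"
    show "d j \<in> M"
    proof (rule ccontr)
      assume dn: "d j \<notin> M"
      have djc: "d j \<in> carrier R" using dc j by blast
      have du: "d j \<in> Units R" using nonM_unit[OF djc dn] .
      obtain i where ji: "j = Suc i" using j by (cases j) auto
      have jt: "Suc i \<le> t" using j ji by simp
      have xj: "x j = d j \<otimes> x i" using xS[OF jt] ji by simp
      have it: "i \<le> t" using jt by simp
      have eq: "{a \<in> carrier R. a \<otimes> x j = \<zero>} = {a \<in> carrier R. a \<otimes> x i = \<zero>}"
        using unit_ann[OF du xc[OF it]] xj by simp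
      have Ij: "I j = {a \<in> carrier R. a \<otimes> x i = \<zero>}" using Ix[OF j] eq by simp
      show False
      proof (cases "i = 0")
        case True
        have "I 1 = {a \<in> carrier R. a \<otimes> \<one> = \<zero>}" using Ij True x0 ji by simp
        also have "\<dots> = {\<zero>}" by auto
        finally show False using s0 by simp
      next
        case False
        have i1: "i \<in> {1..t}" using False it by simp
        have "I j = I i" using Ij Ix[OF i1] by simp
        moreover have "I i \<subset> I (Suc i)" using ss False jt by simp
        ultimately show False using ji by simp
      qed
    qed
  qed
  have powF: "finite F \<Longrightarrow> F \<subseteq> {1..t} \<Longrightarrow> finprod R d F \<in> ideal_pow R M (card F)" for F
  proof (induct F rule: finite_induct)
    case empty show ?case by simp
  next
    case (insert j F)
    have jt: "j \<in> {1..t}" and Ft: "F \<subseteq> {1..t}" using insert(4) by auto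
    have "finprod R d (insert j F) = d j \<otimes> finprod R d F"
      using finprod_insert[OF insert(1) insert(2) dF[OF Ft]] dc jt by blast
    moreover have "d j \<in> M" using dM[OF jt] .
    moreover have "finprod R d F \<in> ideal_pow R M (card F)" using insert(3)[OF Ft] .
    ultimately have "finprod R d (insert j F) \<in> ideal_pow R M (Suc (card F))" using pow_Suc_mem by simp
    thus ?case using insert(1,2) by simp
  qed
  have xM: "\<And>k. k \<le> t \<Longrightarrow> x k \<in> ideal_pow R M k"
  proof -
    fix k assume "k \<le> t"
    hence "{1..k} \<subseteq> {1..t}" by auto
    thus "x k \<in> ideal_pow R M k" unfolding x_def using powF[of "{1..k}"] by simp
  qed
  have yM: "\<And>k. y k \<in> ideal_pow R M (t - k)"
  proof -
    fix k have "{Suc k..t} \<subseteq> {1..t}" by auto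
    thus "y k \<in> ideal_pow R M (t - k)" unfolding y_def using powF[of "{Suc k..t}"] by simp
  qed
  show ?thesis
  proof
    fix i assume i: "i \<in> {1..t}"
    have it: "i \<le> t" using i by auto
    have d2: "d i \<notin> ideal_pow R M 2"
    proof
      assume d2: "d i \<in> ideal_pow R M 2"
      obtain k where ki: "i = Suc k" using i by (cases i) auto
      have "x i = d i \<otimes> x k" using xS ki it by simp
      hence "v = y i \<otimes> (d i \<otimes> x k)" using vxy[OF it] by simp
      moreover have kt: "k \<le> t" using it ki by simp
      moreover have h: "y i \<otimes> (d i \<otimes> x k) \<in> ideal_pow R M (t - i + (2 + k))"
        using pow_mult_mem[OF yM[of i] pow_mult_mem[OF d2 xM[OF kt]]] .
      moreover have "y i \<otimes> (d i \<otimes> x k) = \<zero>" by (rule pow_zero_mem[OF h]) (use it ki in arith)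
      ultimately have "v = \<zero>" by simp
      thus False using v_nz by simp
    qed
    have "I i = ann R (PIdl (x i))" using Id i unfolding x_def by blast
    hence Ii: "ideal (I i) R" using ann_ideal'[OF cgenideal_ideal[OF xc[OF it]]] by simp
    have Ip: "I i \<noteq> carrier R"
    proof
      assume "I i = carrier R"
      hence "\<one> \<in> I i" by simp
      hence "\<one> \<otimes> x i = \<zero>" using Ix[OF i] by blast
      thus False using xnz[OF it] xc[OF it] by simp
    qed
    interpret Q: GAQ R M t v "I i" using GA_axioms Ii Ip by (simp add: GAQ_def GAQ_axioms_def)
    have "exponent (R Quot I i) = t + 1 - i"
    proof (rule Q.Q_exponent_eq)
      show "ideal_pow R M (t + 1 - i) \<subseteq> I i"
      proof
        fix a assume a: "a \<in> ideal_pow R M (t + 1 - i)"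
        have h: "a \<otimes> x i \<in> ideal_pow R M (t + 1 - i + i)" using pow_mult_mem[OF a xM[OF it]] .
        have "a \<otimes> x i = \<zero>" by (rule pow_zero_mem[OF h]) (use it in arith)
        thus "a \<in> I i" using Ix[OF i] a pow_carr by blast
      qed
    next
      fix s assume s: "s < t + 1 - i"
      have "s \<le> t - i" using s it by simp
      hence "y i \<in> ideal_pow R M s" using yM[of i] pow_antimono[of s "t - i"] by blast
      moreover have "y i \<notin> I i" using Ix[OF i] vxy[OF it] v_nz by auto
      ultimately show "\<not> ideal_pow R M s \<subseteq> I i" by blast
    qed
    thus "d i \<in> M - ideal_pow R M 2 \<and> exponent (R Quot I i) = t + 1 - i" using dM[OF i] d2 by simp
  qed
qed

end


definition isdec :: "('a,'b) ring_scheme \<Rightarrow> (nat \<Rightarrow> 'a set) \<Rightarrow> 'a \<Rightarrow> (nat \<Rightarrow> 'a) \<Rightarrow> nat \<Rightarrow> bool" where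
  "isdec R G a f N \<longleftrightarrow> (\<forall>n. f n \<in> G n) \<and> (\<forall>n\<ge>N. f n = \<zero>\<^bsub>R\<^esub>) \<and> a = finsum R f {..<N}"

definition comp :: "('a,'b) ring_scheme \<Rightarrow> (nat \<Rightarrow> 'a set) \<Rightarrow> 'a \<Rightarrow> nat \<Rightarrow> 'a" where
  "comp R G a = (THE f. (\<forall>n. f n \<in> G n) \<and> (\<exists>N. (\<forall>n\<ge>N. f n = \<zero>\<^bsub>R\<^esub>) \<and> a = finsum R f {..<N}))"

locale GR = GA + fixes G S
  assumes gr: "graded_by R G" and SG: "S \<subseteq> G 1" and MS: "M = Idl S"
    and fld: "field (R\<lparr>carrier := G 0\<rparr>)"
begin

lemma G_sub: "additive_subgroup (G n) R" using gr unfolding graded_by_def by blast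
lemma G_carr: "x \<in> G n \<Longrightarrow> x \<in> carrier R" using additive_subgroup.a_subset[OF G_sub] by blast
lemma G_zero: "\<zero> \<in> G n" using additive_subgroup.zero_closed[OF G_sub] .
lemma G_add: "x \<in> G n \<Longrightarrow> y \<in> G n \<Longrightarrow> x \<oplus> y \<in> G n" using additive_subgroup.a_closed[OF G_sub] .
lemma G_mult: "x \<in> G m \<Longrightarrow> y \<in> G n \<Longrightarrow> x \<otimes> y \<in> G (m + n)" using gr unfolding graded_by_def by blast
lemma G_uniq: "a \<in> carrier R \<Longrightarrow> \<exists>!f. (\<forall>n. f n \<in> G n) \<and> (\<exists>N. (\<forall>n\<ge>N. f n = \<zero>) \<and> a = finsum R f {..<N})"
  using gr unfolding graded_by_def by blast

lemma G_one: "\<one> \<in> G 0"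
proof -
  interpret F: field "R\<lparr>carrier := G 0\<rparr>" by (rule fld)
  have "\<one>\<^bsub>R\<lparr>carrier := G 0\<rparr>\<^esub> \<in> carrier (R\<lparr>carrier := G 0\<rparr>)" by (rule F.one_closed)
  thus ?thesis by simp
qed

lemma one_nz: "\<one> \<noteq> \<zero>"
proof -
  interpret F: field "R\<lparr>carrier := G 0\<rparr>" by (rule fld)
  have "\<one>\<^bsub>R\<lparr>carrier := G 0\<rparr>\<^esub> \<noteq> \<zero>\<^bsub>R\<lparr>carrier := G 0\<rparr>\<^esub>" by (rule F.one_not_zero)
  thus ?thesis by simp
qed

lemma fin_ext: fixes f :: "nat \<Rightarrow> 'a" and N j :: nat assumes f: "\<forall>n. f n \<in> carrier R" and z: "\<forall>n\<ge>N. f n = \<zero>"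
  shows "finsum R f {..<N + j} = finsum R f {..<N}"
proof (induct j)
  case 0 show ?case by simp
next
  case (Suc j)
  have "finsum R f {..<N + Suc j} = f (N + j) \<oplus> finsum R f {..<N + j}"
    using f by (simp add: lessThan_Suc Pi_def)
  moreover have "finsum R f {..<N} \<in> carrier R" by (rule finsum_closed) (use f in auto)
  ultimately show ?case using Suc z by simp
qed

lemma isdec_ext: assumes d: "isdec R G a f N" and K: "N \<le> K" shows "isdec R G a f K"
proof -
  obtain j where j: "K = N + j" using K le_Suc_ex by blast
  have fc: "\<forall>n. f n \<in> carrier R" using d G_carr unfolding isdec_def by blast
  show ?thesis using d fin_ext[OF fc, of N j] j K unfolding isdec_def by auto
qed

lemma comp_isdec: assumes a: "a \<in> carrier R" shows "\<exists>N. isdec R G a (comp R G a) N"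
proof -
  have "(\<forall>n. comp R G a n \<in> G n) \<and> (\<exists>N. (\<forall>n\<ge>N. comp R G a n = \<zero>) \<and> a = finsum R (comp R G a) {..<N})"
    unfolding comp_def using theI'[OF G_uniq[OF a]] .
  thus ?thesis unfolding isdec_def by blast
qed

lemma comp_eq: assumes a: "a \<in> carrier R" and d: "isdec R G a f N" shows "comp R G a = f"
proof -
  have "(\<forall>n. f n \<in> G n) \<and> (\<exists>N. (\<forall>n\<ge>N. f n = \<zero>) \<and> a = finsum R f {..<N})"
    using d unfolding isdec_def by blast
  thus ?thesis unfolding comp_def using the1_equality[OF G_uniq[OF a]] by blast
qed

lemma comp_G: "a \<in> carrier R \<Longrightarrow> comp R G a n \<in> G n"
  using comp_isdec unfolding isdec_def by blast

lemma comp_carr: "a \<in> carrier R \<Longrightarrow> comp R G a n \<in> carrier R"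
  using comp_G G_carr by blast

lemma finsum_delta: assumes F: "finite F" and c: "c \<in> carrier R"
  shows "finsum R (\<lambda>r. if r = r0 then c else \<zero>) F = (if r0 \<in> F then c else \<zero>)"
  using F
proof (induct F rule: finite_induct)
  case empty show ?case by simp
next
  case (insert x F)
  have "finsum R (\<lambda>r. if r = r0 then c else \<zero>) (insert x F)
      = (if x = r0 then c else \<zero>) \<oplus> finsum R (\<lambda>r. if r = r0 then c else \<zero>) F"
    using insert(1,2) c by (intro finsum_insert) (auto simp: Pi_def)
  thus ?case using insert c by auto
qed

lemma comp_hom: assumes x: "x \<in> G k" shows "comp R G x = (\<lambda>n. if n = k then x else \<zero>)"
proof (rule comp_eq)
  show "x \<in> carrier R" using G_carr[OF x] .
  have xc: "x \<in> carrier R" using G_carr[OF x] .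
  have "finsum R (\<lambda>n. if n = k then x else \<zero>) {..<Suc k} = x"
    using finsum_delta[of "{..<Suc k}" x k] xc by simp
  thus "isdec R G x (\<lambda>n. if n = k then x else \<zero>) (Suc k)"
    unfolding isdec_def using x G_zero by auto
qed

lemma comp_hom_at: "x \<in> G k \<Longrightarrow> comp R G x n = (if n = k then x else \<zero>)"
  using comp_hom by simp

lemma comp_zero: "comp R G \<zero> n = \<zero>"
  using comp_hom_at[OF G_zero[of 0]] by simp

lemma comp_add: assumes a: "a \<in> carrier R" and b: "b \<in> carrier R"
  shows "comp R G (a \<oplus> b) n = comp R G a n \<oplus> comp R G b n"
proof -
  obtain Na where Na: "isdec R G a (comp R G a) Na" using comp_isdec[OF a] by blast
  obtain Nb where Nb: "isdec R G b (comp R G b) Nb" using comp_isdec[OF b] by blast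
  define K where "K = max Na Nb"
  have da: "isdec R G a (comp R G a) K" using isdec_ext[OF Na] unfolding K_def by simp
  have db: "isdec R G b (comp R G b) K" using isdec_ext[OF Nb] unfolding K_def by simp
  have ca: "comp R G a \<in> {..<K} \<rightarrow> carrier R" using comp_carr[OF a] by blast
  have cb: "comp R G b \<in> {..<K} \<rightarrow> carrier R" using comp_carr[OF b] by blast
  have "isdec R G (a \<oplus> b) (\<lambda>n. comp R G a n \<oplus> comp R G b n) K"
    unfolding isdec_def
  proof (intro conjI allI impI)
    fix n show "comp R G a n \<oplus> comp R G b n \<in> G n" using G_add comp_G a b by blast
  next
    fix n assume "K \<le> n"
    thus "comp R G a n \<oplus> comp R G b n = \<zero>" using da db unfolding isdec_def by simp
  next
    have "a \<oplus> b = finsum R (comp R G a) {..<K} \<oplus> finsum R (comp R G b) {..<K}"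
      using da db unfolding isdec_def by simp
    also have "\<dots> = finsum R (\<lambda>n. comp R G a n \<oplus> comp R G b n) {..<K}"
      using finsum_addf[OF ca cb] by simp
    finally show "a \<oplus> b = finsum R (\<lambda>n. comp R G a n \<oplus> comp R G b n) {..<K}" .
  qed
  thus ?thesis using comp_eq[of "a \<oplus> b"] a b by simp
qed

lemma comp_neg: assumes a: "a \<in> carrier R" shows "comp R G (\<ominus> a) n = \<ominus> comp R G a n"
proof -
  have "comp R G (a \<oplus> \<ominus> a) n = \<zero>" using a comp_zero by (simp add: r_neg)
  hence "comp R G a n \<oplus> comp R G (\<ominus> a) n = \<zero>" using comp_add a by simp
  thus ?thesis using comp_carr a by (metis add.inv_closed add.l_inv_ex minus_equality a_inv_closed add.inv_comm add.inv_inv add.inverse_unique)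
qed

lemma comp_finsum: assumes F: "finite F" and g: "g \<in> F \<rightarrow> carrier R"
  shows "comp R G (finsum R g F) n = finsum R (\<lambda>i. comp R G (g i) n) F"
  using F g
proof (induct F rule: finite_induct)
  case empty show ?case using comp_zero by simp
next
  case (insert x F)
  have gx: "g x \<in> carrier R" and gF: "g \<in> F \<rightarrow> carrier R" using insert(4) by auto
  have "finsum R g (insert x F) = g x \<oplus> finsum R g F" using finsum_insert[OF insert(1,2) gF gx] .
  hence "comp R G (finsum R g (insert x F)) n = comp R G (g x) n \<oplus> comp R G (finsum R g F) n"
    using comp_add gx finsum_closed[OF gF] by simp
  also have "\<dots> = comp R G (g x) n \<oplus> finsum R (\<lambda>i. comp R G (g i) n) F" using insert(3)[OF gF] by simp
  also have "\<dots> = finsum R (\<lambda>i. comp R G (g i) n) (insert x F)"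
    using finsum_insert[OF insert(1,2), of "\<lambda>i. comp R G (g i) n"] comp_carr gx gF by (auto simp: Pi_def)
  finally show ?case .
qed

end


inductive_set lcs :: "('a,'b) ring_scheme \<Rightarrow> 'a set \<Rightarrow> 'a set" for R S where
  lcs0: "\<zero>\<^bsub>R\<^esub> \<in> lcs R S"
| lcsS: "r \<in> carrier R \<Longrightarrow> s \<in> S \<Longrightarrow> a \<in> lcs R S \<Longrightarrow> r \<otimes>\<^bsub>R\<^esub> s \<oplus>\<^bsub>R\<^esub> a \<in> lcs R S"

context GR begin

lemma comp_hmul: assumes x: "x \<in> G p" and b: "b \<in> carrier R"
  shows "comp R G (x \<otimes> b) k = (if p \<le> k then x \<otimes> comp R G b (k - p) else \<zero>)"
proof -
  have xc: "x \<in> carrier R" using G_carr[OF x] .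
  obtain N where N: "isdec R G b (comp R G b) N" using comp_isdec[OF b] by blast
  define K where "K = max N (Suc k)"
  have dK: "isdec R G b (comp R G b) K" using isdec_ext[OF N] unfolding K_def by simp
  have kK: "k < K" unfolding K_def by simp
  have cb: "comp R G b \<in> {..<K} \<rightarrow> carrier R" using comp_carr[OF b] by blast
  have cb': "(\<lambda>r. x \<otimes> comp R G b r) \<in> {..<K} \<rightarrow> carrier R" using comp_carr[OF b] xc by blast
  have "x \<otimes> b = x \<otimes> finsum R (comp R G b) {..<K}" using dK unfolding isdec_def by simp
  also have "\<dots> = finsum R (\<lambda>r. x \<otimes> comp R G b r) {..<K}" using finsum_rdistr[OF _ xc cb] by simp
  finally have eq: "x \<otimes> b = finsum R (\<lambda>r. x \<otimes> comp R G b r) {..<K}" .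
  have "comp R G (x \<otimes> b) k = finsum R (\<lambda>r. comp R G (x \<otimes> comp R G b r) k) {..<K}"
    unfolding eq using comp_finsum[OF _ cb'] by simp
  also have "\<dots> = finsum R (\<lambda>r. if k = p + r then x \<otimes> comp R G b r else \<zero>) {..<K}"
  proof (rule finsum_cong')
    show "(\<lambda>r. if k = p + r then x \<otimes> comp R G b r else \<zero>) \<in> {..<K} \<rightarrow> carrier R"
      using comp_carr[OF b] xc by auto
    fix r assume "r \<in> {..<K}"
    have "x \<otimes> comp R G b r \<in> G (p + r)" using G_mult[OF x comp_G[OF b]] .
    thus "comp R G (x \<otimes> comp R G b r) k = (if k = p + r then x \<otimes> comp R G b r else \<zero>)"
      using comp_hom_at by simp
  qed simp
  finally have c1: "comp R G (x \<otimes> b) k = finsum R (\<lambda>r. if k = p + r then x \<otimes> comp R G b r else \<zero>) {..<K}" .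
  show ?thesis
  proof (cases "p \<le> k")
    case True
    have "finsum R (\<lambda>r. if k = p + r then x \<otimes> comp R G b r else \<zero>) {..<K}
        = finsum R (\<lambda>r. if r = k - p then x \<otimes> comp R G b (k - p) else \<zero>) {..<K}"
    proof (rule finsum_cong')
      show "(\<lambda>r. if r = k - p then x \<otimes> comp R G b (k - p) else \<zero>) \<in> {..<K} \<rightarrow> carrier R"
        using comp_carr[OF b] xc by auto
      fix r assume "r \<in> {..<K}"
      show "(if k = p + r then x \<otimes> comp R G b r else \<zero>) = (if r = k - p then x \<otimes> comp R G b (k - p) else \<zero>)"
        using True by auto
    qed simp
    also have "\<dots> = x \<otimes> comp R G b (k - p)"
    proof -
      have "k - p < K" using kK by arith
      thus ?thesis using finsum_delta[of "{..<K}" "x \<otimes> comp R G b (k - p)" "k - p"] comp_carr[OF b] xc by simp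
    qed
    finally show ?thesis using c1 True by simp
  next
    case False
    have "finsum R (\<lambda>r. if k = p + r then x \<otimes> comp R G b r else \<zero>) {..<K} = finsum R (\<lambda>r. \<zero>) {..<K}"
      by (rule finsum_cong') (use False in auto)
    thus ?thesis using c1 False by simp
  qed
qed

definition Pset :: "nat \<Rightarrow> 'a set" where "Pset q = {a \<in> carrier R. \<forall>k<q. comp R G a k = \<zero>}"

lemma P_mul: assumes a: "a \<in> Pset \<alpha>" and b: "b \<in> Pset \<beta>" shows "a \<otimes> b \<in> Pset (\<alpha> + \<beta>)"
proof -
  have ac: "a \<in> carrier R" and bc: "b \<in> carrier R" using a b unfolding Pset_def by auto
  obtain N where N: "isdec R G a (comp R G a) N" using comp_isdec[OF ac] by blast
  have ca: "comp R G a \<in> {..<N} \<rightarrow> carrier R" using comp_carr[OF ac] by blast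
  have ca': "(\<lambda>p. comp R G a p \<otimes> b) \<in> {..<N} \<rightarrow> carrier R" using comp_carr[OF ac] bc by blast
  have "a \<otimes> b = finsum R (comp R G a) {..<N} \<otimes> b" using N unfolding isdec_def by simp
  also have "\<dots> = finsum R (\<lambda>p. comp R G a p \<otimes> b) {..<N}" using finsum_ldistr[OF _ bc ca] by simp
  finally have eq: "a \<otimes> b = finsum R (\<lambda>p. comp R G a p \<otimes> b) {..<N}" .
  have "\<forall>k<\<alpha> + \<beta>. comp R G (a \<otimes> b) k = \<zero>"
  proof (intro allI impI)
    fix k assume k: "k < \<alpha> + \<beta>"
    have "comp R G (a \<otimes> b) k = finsum R (\<lambda>p. comp R G (comp R G a p \<otimes> b) k) {..<N}"
      unfolding eq using comp_finsum[OF _ ca'] by simp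
    also have "\<dots> = finsum R (\<lambda>p. \<zero>) {..<N}"
    proof (rule finsum_cong')
      fix p assume "p \<in> {..<N}"
      have "comp R G (comp R G a p \<otimes> b) k = (if p \<le> k then comp R G a p \<otimes> comp R G b (k - p) else \<zero>)"
        using comp_hmul[OF comp_G[OF ac] bc] .
      moreover have "p \<le> k \<Longrightarrow> comp R G a p \<otimes> comp R G b (k - p) = \<zero>"
      proof -
        assume pk: "p \<le> k"
        show "comp R G a p \<otimes> comp R G b (k - p) = \<zero>"
        proof (cases "p < \<alpha>")
          case True
          hence "comp R G a p = \<zero>" using a unfolding Pset_def by blast
          thus ?thesis using comp_carr[OF bc] by simp
        next
          case False
          hence "k - p < \<beta>" using k pk by simp
          hence "comp R G b (k - p) = \<zero>" using b unfolding Pset_def by blast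
          thus ?thesis using comp_carr[OF ac] by simp
        qed
      qed
      ultimately show "comp R G (comp R G a p \<otimes> b) k = \<zero>" by simp
    qed simp_all
    finally show "comp R G (a \<otimes> b) k = \<zero>" by simp
  qed
  thus ?thesis unfolding Pset_def using ac bc by simp
qed

lemma P0: "Pset 0 = carrier R" unfolding Pset_def by simp

lemma P_ideal: "ideal (Pset q) R"
proof (rule idealI)
  show "ring R" by (rule ring_axioms)
  show "subgroup (Pset q) (add_monoid R)"
  proof (rule add.subgroupI)
    show "Pset q \<subseteq> carrier R" unfolding Pset_def by blast
    show "Pset q \<noteq> {}" unfolding Pset_def using comp_zero by auto
  next
    fix a assume a: "a \<in> Pset q"
    hence ac: "a \<in> carrier R" unfolding Pset_def by blast
    show "\<ominus> a \<in> Pset q" using a comp_neg[OF ac] ac unfolding Pset_def by simp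
  next
    fix a b assume a: "a \<in> Pset q" and b: "b \<in> Pset q"
    hence ac: "a \<in> carrier R" and bc: "b \<in> carrier R" unfolding Pset_def by auto
    show "a \<oplus> b \<in> Pset q" using a b comp_add[OF ac bc] ac bc unfolding Pset_def by simp
  qed
next
  fix a x assume a: "a \<in> Pset q" and x: "x \<in> carrier R"
  have x0: "x \<in> Pset 0" using x P0 by simp
  show "x \<otimes> a \<in> Pset q" using P_mul[OF x0 a] by simp
  show "a \<otimes> x \<in> Pset q" using P_mul[OF a x0] by simp
qed

lemma G_P: assumes x: "x \<in> G e" and q: "q \<le> e" shows "x \<in> Pset q"
  unfolding Pset_def using G_carr[OF x] comp_hom_at[OF x] q by auto

lemma M_P1: "M \<subseteq> Pset 1"
proof -
  have "S \<subseteq> Pset 1" using SG G_P[of _ 1 1] by blast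
  thus ?thesis unfolding MS using genideal_minimal[OF P_ideal] by blast
qed

lemma Mpow_P: "ideal_pow R M q \<subseteq> Pset q"
proof (induct q)
  case 0 show ?case using P0 by simp
next
  case (Suc q)
  show ?case
  proof
    fix s assume "s \<in> ideal_pow R M (Suc q)"
    hence "s \<in> ideal_prod R M (ideal_pow R M q)" by simp
    thus "s \<in> Pset (Suc q)"
    proof (induct s rule: ideal_prod.induct)
      case (prod i j)
      have "i \<in> Pset 1" using M_P1 prod(1) by blast
      moreover have "j \<in> Pset q" using Suc prod(2) by blast
      ultimately show ?case using P_mul by fastforce
    next
      case (sum s1 s2)
      show ?case using id_add[OF P_ideal sum(2) sum(4)] .
    qed
  qed
qed

lemma G_Mpow: assumes x: "x \<in> G e" and xm: "x \<in> ideal_pow R M (Suc e)" shows "x = \<zero>"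
proof -
  have "x \<in> Pset (Suc e)" using Mpow_P xm by blast
  hence "comp R G x e = \<zero>" unfolding Pset_def by blast
  thus ?thesis using comp_hom_at[OF x] by simp
qed

lemma P1_M: "Pset 1 \<subseteq> M"
proof
  fix a assume a: "a \<in> Pset 1"
  show "a \<in> M"
  proof (rule ccontr)
    assume "a \<notin> M"
    hence "a \<in> Units R" using nonM_unit a unfolding Pset_def by blast
    then obtain w where w: "w \<in> carrier R" "w \<otimes> a = \<one>" unfolding Units_def by blast
    hence "\<one> \<in> Pset 1" using id_lmult[OF P_ideal a w(1)] by simp
    hence "comp R G \<one> 0 = \<zero>" unfolding Pset_def by blast
    thus False using comp_hom_at[OF G_one] one_nz by simp
  qed
qed

lemma G_M: "x \<in> G e \<Longrightarrow> 1 \<le> e \<Longrightarrow> x \<in> M"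
  using G_P P1_M by blast

lemma S_carr: "S \<subseteq> carrier R" using SG G_carr by blast

lemma lcs_carr: "a \<in> lcs R S \<Longrightarrow> a \<in> carrier R"
  by (induct a rule: lcs.induct) (use S_carr in auto)

lemma lcs_add: "a \<in> lcs R S \<Longrightarrow> b \<in> lcs R S \<Longrightarrow> a \<oplus> b \<in> lcs R S"
proof (induct a rule: lcs.induct)
  case lcs0 thus ?case using lcs_carr by simp
next
  case (lcsS r s a)
  have sc: "s \<in> carrier R" using lcsS S_carr by blast
  have "r \<otimes> s \<oplus> a \<oplus> b = r \<otimes> s \<oplus> (a \<oplus> b)"
    using lcsS(1) sc lcs_carr[OF lcsS(3)] lcs_carr[OF lcsS(5)] by (simp add: a_assoc)
  thus ?case using lcs.lcsS[OF lcsS(1,2) lcsS(4)[OF lcsS(5)]] by simp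
qed

lemma lcs_neg: "a \<in> lcs R S \<Longrightarrow> \<ominus> a \<in> lcs R S"
proof (induct a rule: lcs.induct)
  case lcs0 thus ?case using lcs.lcs0 by simp
next
  case (lcsS r s a)
  have sc: "s \<in> carrier R" using lcsS S_carr by blast
  have ac: "a \<in> carrier R" using lcs_carr[OF lcsS(3)] .
  have "\<ominus> (r \<otimes> s \<oplus> a) = (\<ominus> r) \<otimes> s \<oplus> \<ominus> a"
    using lcsS(1) sc ac by (simp add: minus_add l_minus)
  thus ?case using lcs.lcsS[OF _ lcsS(2) lcsS(4)] lcsS(1) by simp
qed

lemma lcs_mult: "a \<in> lcs R S \<Longrightarrow> c \<in> carrier R \<Longrightarrow> c \<otimes> a \<in> lcs R S"
proof (induct a rule: lcs.induct)
  case lcs0 thus ?case using lcs.lcs0 by simp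
next
  case (lcsS r s a)
  have sc: "s \<in> carrier R" using lcsS S_carr by blast
  have ac: "a \<in> carrier R" using lcs_carr[OF lcsS(3)] .
  have "c \<otimes> (r \<otimes> s \<oplus> a) = (c \<otimes> r) \<otimes> s \<oplus> c \<otimes> a"
    using lcsS(1,5) sc ac by (simp add: r_distr m_assoc)
  thus ?case using lcs.lcsS[OF _ lcsS(2) lcsS(4)[OF lcsS(5)]] lcsS(1,5) by simp
qed

lemma lcs_ideal: "ideal (lcs R S) R"
proof (rule idealI)
  show "ring R" by (rule ring_axioms)
  show "subgroup (lcs R S) (add_monoid R)"
  proof (rule add.subgroupI)
    show "lcs R S \<subseteq> carrier R" using lcs_carr by blast
    show "lcs R S \<noteq> {}" using lcs.lcs0 by blast
  next
    fix a assume "a \<in> lcs R S" thus "\<ominus> a \<in> lcs R S" by (rule lcs_neg)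
  next
    fix a b assume "a \<in> lcs R S" "b \<in> lcs R S" thus "a \<oplus> b \<in> lcs R S" by (rule lcs_add)
  qed
next
  fix a x assume a: "a \<in> lcs R S" and x: "x \<in> carrier R"
  show "x \<otimes> a \<in> lcs R S" using lcs_mult[OF a x] .
  have "a \<otimes> x = x \<otimes> a" using lcs_carr[OF a] x by (simp add: m_comm)
  thus "a \<otimes> x \<in> lcs R S" using lcs_mult[OF a x] by simp
qed

lemma S_lcs: "S \<subseteq> lcs R S"
proof
  fix s assume s: "s \<in> S"
  have "\<one> \<otimes> s \<oplus> \<zero> \<in> lcs R S" using lcs.lcsS[OF one_closed s lcs.lcs0] .
  thus "s \<in> lcs R S" using s S_carr by auto
qed

lemma M_lcs: "M \<subseteq> lcs R S" unfolding MS using genideal_minimal[OF lcs_ideal S_lcs] .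

lemma S_M: "S \<subseteq> M" unfolding MS using genideal_self[OF S_carr] .

lemma deg2: assumes y: "y \<in> G n" and n: "2 \<le> n" and yM: "y \<in> M" shows "y \<in> ideal_pow R M 2"
proof -
  have "a \<in> lcs R S \<Longrightarrow> comp R G a n \<in> ideal_pow R M 2" for a
  proof (induct a rule: lcs.induct)
    case lcs0 show ?case using comp_zero id_zero[OF pow_ideal] by simp
  next
    case (lcsS r s a)
    have sc: "s \<in> carrier R" using lcsS S_carr by blast
    have ac: "a \<in> carrier R" using lcs_carr[OF lcsS(3)] .
    have sG: "s \<in> G 1" using lcsS(2) SG by blast
    have "comp R G (r \<otimes> s \<oplus> a) n = comp R G (s \<otimes> r) n \<oplus> comp R G a n"
      using comp_add lcsS(1) sc ac by (simp add: m_comm)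
    also have "comp R G (s \<otimes> r) n = s \<otimes> comp R G r (n - 1)" using comp_hmul[OF sG lcsS(1)] n by simp
    finally have eq: "comp R G (r \<otimes> s \<oplus> a) n = s \<otimes> comp R G r (n - 1) \<oplus> comp R G a n" .
    have "comp R G r (n - 1) \<in> M" using G_M[OF comp_G[OF lcsS(1)]] n by simp
    hence "comp R G r (n - 1) \<in> ideal_pow R M 1" using pow_one by simp
    hence "s \<otimes> comp R G r (n - 1) \<in> ideal_pow R M (Suc 1)" using pow_Suc_mem S_M lcsS(2) by blast
    hence "s \<otimes> comp R G r (n - 1) \<in> ideal_pow R M 2" by (simp add: numeral_2_eq_2)
    thus ?case using eq id_add[OF pow_ideal _ lcsS(4)] by simp
  qed
  hence "comp R G y n \<in> ideal_pow R M 2" using yM M_lcs by blast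
  thus ?thesis using comp_hom_at[OF y] by simp
qed

end


context GR begin

lemma part3g: assumes yG: "y \<in> G n" and yM: "y \<in> M - ideal_pow R M 2"
  shows "exponent (R Quot ann R (PIdl y)) = t"
proof -
  have yc: "y \<in> carrier R" using G_carr[OF yG] .
  have yM1: "y \<in> M" using yM by blast
  have ynz: "y \<noteq> \<zero>" using yM id_zero[OF pow_ideal] by blast
  have y1: "y \<in> ideal_pow R M 1" using yM1 pow_one by simp
  have n0: "n \<noteq> 0"
  proof
    assume "n = 0"
    hence "y \<in> G 0" using yG by simp
    moreover have "y \<in> ideal_pow R M (Suc 0)" using y1 by simp
    ultimately have "y = \<zero>" by (rule G_Mpow)
    thus False using ynz by simp
  qed
  have n1: "n = 1"
  proof (rule ccontr)
    assume "n \<noteq> 1"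
    hence "2 \<le> n" using n0 by simp
    hence "y \<in> ideal_pow R M 2" using deg2[OF yG _ yM1] by simp
    thus False using yM by blast
  qed
  have yG1: "y \<in> G 1" using yG n1 by simp
  have t1: "1 \<le> t"
  proof (rule ccontr)
    assume "\<not> 1 \<le> t"
    hence "t = 0" by simp
    hence "y \<in> ideal_pow R M (Suc t)" using y1 by simp
    hence "y = \<zero>" using Mnil by blast
    thus False using ynz by simp
  qed
  define I where "I = ann R (PIdl y)"
  have Ieq: "I = {a \<in> carrier R. a \<otimes> y = \<zero>}" unfolding I_def using ann_PIdl[OF yc] .
  have Iid: "ideal I R" unfolding I_def using ann_ideal'[OF cgenideal_ideal[OF yc]] .
  have Ip: "I \<noteq> carrier R"
  proof
    assume "I = carrier R"
    hence "\<one> \<otimes> y = \<zero>" using Ieq by blast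
    thus False using ynz yc by simp
  qed
  interpret Q: GAQ R M t v I using GA_axioms Iid Ip by (simp add: GAQ_def GAQ_axioms_def)
  have "exponent (R Quot I) = t"
  proof (rule Q.Q_exponent_eq)
    show "ideal_pow R M t \<subseteq> I"
    proof
      fix a assume a: "a \<in> ideal_pow R M t"
      have h: "a \<otimes> y \<in> ideal_pow R M (t + 1)" using pow_mult_mem[OF a y1] .
      have "a \<otimes> y = \<zero>" by (rule pow_zero_mem[OF h]) simp
      thus "a \<in> I" using Ieq a pow_carr by blast
    qed
  next
    fix s assume s: "s < t"
    show "\<not> ideal_pow R M s \<subseteq> I"
    proof
      assume sI: "ideal_pow R M s \<subseteq> I"
      have H: "\<And>a. a \<in> ideal_pow R M (t - 1) \<Longrightarrow> a \<otimes> y = \<zero>"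
      proof -
        fix a assume a: "a \<in> ideal_pow R M (t - 1)"
        have "s \<le> t - 1" using s by simp
        hence "a \<in> ideal_pow R M s" using pow_antimono[of s "t - 1"] a by blast
        thus "a \<otimes> y = \<zero>" using sI Ieq by blast
      qed
      have C: "\<exists>j a. a \<in> G j \<and> a \<in> ideal_pow R M j \<and> a \<otimes> y \<noteq> \<zero> \<and> (\<forall>s\<in>S. (a \<otimes> y) \<otimes> s = \<zero>)"
      proof (rule ccontr)
        assume nC: "\<not> ?thesis"
        have "\<exists>a. a \<in> G j \<and> a \<in> ideal_pow R M j \<and> a \<otimes> y \<noteq> \<zero>" for j
        proof (induct j)
          case 0
          have "\<one> \<in> G 0 \<and> \<one> \<in> ideal_pow R M 0 \<and> \<one> \<otimes> y \<noteq> \<zero>" using G_one ynz yc by simp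
          thus ?case by blast
        next
          case (Suc j)
          then obtain a where a: "a \<in> G j" "a \<in> ideal_pow R M j" "a \<otimes> y \<noteq> \<zero>" by blast
          then obtain s where s: "s \<in> S" "(a \<otimes> y) \<otimes> s \<noteq> \<zero>" using nC by blast
          have ac: "a \<in> carrier R" using G_carr[OF a(1)] .
          have sc: "s \<in> carrier R" using s S_carr by blast
          have sG: "s \<in> G 1" using s SG by blast
          have "a \<otimes> s \<in> G (j + 1)" using G_mult[OF a(1) sG] .
          hence g: "a \<otimes> s \<in> G (Suc j)" by simp
          have "s \<otimes> a \<in> ideal_pow R M (Suc j)" using pow_Suc_mem[OF _ a(2)] S_M s by blast
          hence m: "a \<otimes> s \<in> ideal_pow R M (Suc j)" using ac sc by (simp add: m_comm)
          have "(a \<otimes> s) \<otimes> y = (a \<otimes> y) \<otimes> s" using ac sc yc by (simp add: m_assoc m_comm[of s y])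
          hence "(a \<otimes> s) \<otimes> y \<noteq> \<zero>" using s(2) by simp
          thus ?case using g m by blast
        qed
        then obtain a where a: "a \<in> ideal_pow R M (Suc t)" "a \<otimes> y \<noteq> \<zero>" by blast
        hence "a = \<zero>" using Mnil by blast
        thus False using a(2) yc by simp
      qed
      then obtain j a where ja: "a \<in> G j" "a \<in> ideal_pow R M j" "a \<otimes> y \<noteq> \<zero>" "\<forall>s\<in>S. (a \<otimes> y) \<otimes> s = \<zero>"
        by blast
      have ac: "a \<in> carrier R" using G_carr[OF ja(1)] .
      have ayc: "a \<otimes> y \<in> carrier R" using ac yc by simp
      have "S \<subseteq> ann R (PIdl (a \<otimes> y))"
      proof
        fix s assume s: "s \<in> S"
        have sc: "s \<in> carrier R" using s S_carr by blast
        have "(a \<otimes> y) \<otimes> s = \<zero>" using ja(4) s by blast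
        hence "s \<otimes> (a \<otimes> y) = \<zero>" using m_comm[OF sc ayc] by simp
        thus "s \<in> ann R (PIdl (a \<otimes> y))" using ann_PIdl[OF ayc] sc by simp
      qed
      hence "M \<subseteq> ann R (PIdl (a \<otimes> y))" unfolding MS
        using genideal_minimal[OF ann_ideal'[OF cgenideal_ideal[OF ayc]]] by blast
      hence "\<forall>m\<in>M. (a \<otimes> y) \<otimes> m = \<zero>"
        using ann_PIdl[OF ayc] M_carr ayc by (auto simp: m_comm)
      hence "a \<otimes> y \<in> ann R M" using ann_mem ayc by blast
      hence ayt: "a \<otimes> y \<in> ideal_pow R M t" using soc1 by simp
      have jt: "j < t - 1"
      proof (rule ccontr)
        assume "\<not> j < t - 1"
        hence "a \<in> ideal_pow R M (t - 1)" using pow_antimono[of "t - 1" j] ja(2) by auto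
        thus False using H ja(3) by blast
      qed
      have g: "a \<otimes> y \<in> G (j + 1)" using G_mult[OF ja(1) yG1] .
      have "Suc (j + 1) \<le> t" using jt by simp
      hence "a \<otimes> y \<in> ideal_pow R M (Suc (j + 1))" using pow_antimono[of "Suc (j + 1)" t] ayt by blast
      hence "a \<otimes> y = \<zero>" using G_Mpow[OF g] by blast
      thus False using ja(3) by simp
    qed
  qed
  thus ?thesis unfolding I_def .
qed

end

context GA begin

lemma part3:
  assumes gr: "graded_by R G" and SG: "\<exists>S \<subseteq> G 1. M = Idl S" and fld: "field (R\<lparr>carrier := G 0\<rparr>)"
    and yh: "\<exists>n. y \<in> G n" and yM: "y \<in> M - ideal_pow R M 2"
  shows "exponent (R Quot ann R (PIdl y)) = t"
proof -
  obtain S where S: "S \<subseteq> G 1" "M = Idl S" using SG by blast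
  interpret GR R M t v G S using GA_axioms gr S fld by (simp add: GR_def GR_axioms_def)
  obtain n where n: "y \<in> G n" using yh by blast
  show ?thesis using part3g[OF n yM] .
qed

end


context GA begin

lemma conj1: "\<forall>(I :: nat \<Rightarrow> 'a set) (d :: nat \<Rightarrow> 'a).
       t \<ge> 1 \<and>
       (\<forall>i\<in>{1..t}. gorenstein_ideal R (I i)) \<and>
       {\<zero>} \<subset> I 1 \<and>
       (\<forall>i. 1 \<le> i \<and> i < t \<longrightarrow> I i \<subset> I (Suc i)) \<and>
       I t = M \<and>
       (\<forall>i\<in>{1..t}. d i \<in> carrier R) \<and>
       v = finprod R d {1..t} \<and>
       (\<forall>i\<in>{1..t}. I i = ann R (PIdl (finprod R d {1..i})))
     \<longrightarrow>
       (\<forall>i\<in>{1..t}. d i \<in> M - ideal_pow R M 2 \<and>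
                    exponent (R Quot I i) = t + 1 - i) \<and>
       (\<exists>y \<in> M - ideal_pow R M 2.
          I 1 = ann R (PIdl y) \<and> exponent (R Quot I 1) = t + 1 - 1)"
proof (intro allI impI)
  fix I :: "nat \<Rightarrow> 'a set" and d :: "nat \<Rightarrow> 'a"
  assume H: "t \<ge> 1 \<and>
       (\<forall>i\<in>{1..t}. gorenstein_ideal R (I i)) \<and>
       {\<zero>} \<subset> I 1 \<and>
       (\<forall>i. 1 \<le> i \<and> i < t \<longrightarrow> I i \<subset> I (Suc i)) \<and>
       I t = M \<and>
       (\<forall>i\<in>{1..t}. d i \<in> carrier R) \<and>
       v = finprod R d {1..t} \<and>
       (\<forall>i\<in>{1..t}. I i = ann R (PIdl (finprod R d {1..i})))"
  have t1: "t \<ge> 1" and s0: "{\<zero>} \<subset> I 1" and ss: "\<forall>i. 1 \<le> i \<and> i < t \<longrightarrow> I i \<subset> I (Suc i)"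
    and dc: "\<forall>i\<in>{1..t}. d i \<in> carrier R" and vd: "v = finprod R d {1..t}"
    and Id: "\<forall>i\<in>{1..t}. I i = ann R (PIdl (finprod R d {1..i}))" using H by blast+
  have P: "\<forall>i\<in>{1..t}. d i \<in> M - ideal_pow R M 2 \<and> exponent (R Quot I i) = t + 1 - i"
    using part1[OF s0 ss dc vd Id] .
  have one: "1 \<in> {1..t}" using t1 by simp
  have d1c: "d 1 \<in> carrier R" using dc one by blast
  have "finprod R d {1..1} = d 1" using d1c by simp
  hence "I 1 = ann R (PIdl (d 1))" using Id one by simp
  moreover have "d 1 \<in> M - ideal_pow R M 2 \<and> exponent (R Quot I 1) = t + 1 - 1" using P one by blast
  ultimately show "(\<forall>i\<in>{1..t}. d i \<in> M - ideal_pow R M 2 \<and> exponent (R Quot I i) = t + 1 - i) \<and>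
       (\<exists>y \<in> M - ideal_pow R M 2. I 1 = ann R (PIdl y) \<and> exponent (R Quot I 1) = t + 1 - 1)"
    using P by blast
qed

lemma conj2: "\<forall>I. gorenstein_ideal R I \<and> exponent (R Quot I) = t + 1 - 1 \<longrightarrow>
       (\<exists>y \<in> M - ideal_pow R M 2. ann R I = PIdl y)"
  using part2 by simp

lemma conj3: "\<forall>(G :: nat \<Rightarrow> 'a set) y.
       graded_by R G \<and>
       (\<exists>S \<subseteq> G 1. M = Idl S) \<and>
       field (R\<lparr>carrier := G 0\<rparr>) \<and>
       (\<exists>n. y \<in> G n) \<and>
       y \<in> M - ideal_pow R M 2
     \<longrightarrow> exponent (R Quot ann R (PIdl y)) = t + 1 - 1"
proof (intro allI impI, elim conjE)
  fix G :: "nat \<Rightarrow> 'a set" and y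
  assume "graded_by R G" "\<exists>S \<subseteq> G 1. M = Idl S" "field (R\<lparr>carrier := G 0\<rparr>)" "\<exists>n. y \<in> G n"
    "y \<in> M - ideal_pow R M 2"
  hence "exponent (R Quot ann R (PIdl y)) = t" by (rule part3)
  thus "exponent (R Quot ann R (PIdl y)) = t + 1 - 1" by simp
qed

end

theorem proposition3p6:
  fixes A :: "('a, 'b) ring_scheme" and t :: nat and v :: 'a
  assumes gor: "gorenstein_artinian A"
    and expo: "exponent A = t + 1"
    and v: "v \<in> carrier A"
    and socle1: "ann A (max_ideal A) = ideal_pow A (max_ideal A) t"
    and socle2: "ann A (max_ideal A) = PIdl\<^bsub>A\<^esub> v"
  shows
   "(\<forall>(I :: nat \<Rightarrow> 'a set) (d :: nat \<Rightarrow> 'a).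
       t \<ge> 1 \<and>
       (\<forall>i\<in>{1..t}. gorenstein_ideal A (I i)) \<and>
       {\<zero>\<^bsub>A\<^esub>} \<subset> I 1 \<and>
       (\<forall>i. 1 \<le> i \<and> i < t \<longrightarrow> I i \<subset> I (Suc i)) \<and>
       I t = max_ideal A \<and>
       (\<forall>i\<in>{1..t}. d i \<in> carrier A) \<and>
       v = finprod A d {1..t} \<and>
       (\<forall>i\<in>{1..t}. I i = ann A (PIdl\<^bsub>A\<^esub> (finprod A d {1..i})))
     \<longrightarrow>
       (\<forall>i\<in>{1..t}. d i \<in> max_ideal A - ideal_pow A (max_ideal A) 2 \<and>
                    exponent (A Quot I i) = exponent A - i) \<and>
       (\<exists>y \<in> max_ideal A - ideal_pow A (max_ideal A) 2.
          I 1 = ann A (PIdl\<^bsub>A\<^esub> y) \<and> exponent (A Quot I 1) = exponent A - 1))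
  \<and>
   (\<forall>I. gorenstein_ideal A I \<and> exponent (A Quot I) = exponent A - 1 \<longrightarrow>
       (\<exists>y \<in> max_ideal A - ideal_pow A (max_ideal A) 2. ann A I = PIdl\<^bsub>A\<^esub> y))
  \<and>
   (\<forall>(G :: nat \<Rightarrow> 'a set) y.
       graded_by A G \<and>
       (\<exists>S \<subseteq> G 1. max_ideal A = Idl\<^bsub>A\<^esub> S) \<and>
       field (A\<lparr>carrier := G 0\<rparr>) \<and>
       (\<exists>n. y \<in> G n) \<and>
       y \<in> max_ideal A - ideal_pow A (max_ideal A) 2
     \<longrightarrow> exponent (A Quot ann A (PIdl\<^bsub>A\<^esub> y)) = exponent A - 1)"
proof -
  have AL: "artinian_local A" and v': "\<exists>v'\<in>carrier A. v' \<noteq> \<zero>\<^bsub>A\<^esub> \<and> ann A (max_ideal A) = PIdl\<^bsub>A\<^esub> v'"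
    using gor unfolding gorenstein_artinian_def by auto
  have loc: "is_local A" and noeth: "noetherian_ring A" and nil: "\<exists>r. ideal_pow A (max_ideal A) r = {\<zero>\<^bsub>A\<^esub>}"
    using AL unfolding artinian_local_def by auto
  have cr: "cring A" and ex1: "\<exists>!M. maximalideal M A" using loc unfolding is_local_def by auto
  obtain M0 where M0: "maximalideal M0 A" "\<And>N. maximalideal N A \<Longrightarrow> N = M0" using ex1 by blast
  have mx: "max_ideal A = M0" unfolding max_ideal_def using M0 by (rule the_equality)
  have "ideal_pow A (max_ideal A) (exponent A) = {\<zero>\<^bsub>A\<^esub>}"
    unfolding exponent_def using nil by (rule LeastI_ex)
  hence Mnil: "ideal_pow A M0 (Suc t) = {\<zero>\<^bsub>A\<^esub>}" using expo mx by simp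
  have vnz: "v \<noteq> \<zero>\<^bsub>A\<^esub>"
  proof
    assume v0: "v = \<zero>\<^bsub>A\<^esub>"
    interpret cring A by (rule cr)
    obtain v' where v'': "v' \<in> carrier A" "v' \<noteq> \<zero>\<^bsub>A\<^esub>" "ann A (max_ideal A) = PIdl\<^bsub>A\<^esub> v'" using v' by blast
    have "v' \<in> PIdl\<^bsub>A\<^esub> v" using socle2 v''(3) ring.cgenideal_self[OF cring.axioms(1)[OF cr] v''(1)] by simp
    then obtain r where "r \<in> carrier A" "v' = r \<otimes>\<^bsub>A\<^esub> v" unfolding cgenideal_def by blast
    hence "v' = \<zero>\<^bsub>A\<^esub>" using v0 by simp
    thus False using v''(2) by simp
  qed
  have so1: "ann A M0 = ideal_pow A M0 t" using socle1 mx by simp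
  have so2: "ann A M0 = PIdl\<^bsub>A\<^esub> v" using socle2 mx by simp
  have GAI: "GA A M0 t v" unfolding GA_def GA_axioms_def
    using cr M0 noeth Mnil so1 so2 v vnz by blast
  interpret GA A M0 t v by (rule GAI)
  show ?thesis unfolding mx expo using conj1 conj2 conj3 by blast
qed


end
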